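(* Let $r\in\mathbb{N}$, $n\in\mathbb{N}$, $\alpha\in\mathbb{N}$, $\beta>\frac{n+r+1}{2\alpha}$, let $f\in C^n(\mathbb{R})$ with $f^{(n)}\in L_1(\mathbb{R})$, and let $\xi>0$. Then $$\|\Delta(x)\|_1\le\frac{1}{(r+1)(n-1)!\,\Gamma(\frac{1}{2\alpha})\Gamma(\beta-\frac{1}{2\alpha})}\left[\sum_{k=1}^{r+1}\binom{r+1}{k}\Gamma\left(\frac{n+k}{2\alpha}\right)\Gamma\left(\beta-\frac{n+k}{2\alpha}\right)\right]\omega_r(f^{(n)},\xi)_1\,\xi^n.$$ Hence $\|\Delta(x)\|_1\to0$ as $\xi\to0$. If additionally $f^{(2m)}\in L_1(\mathbb{R})$ for $m=1,\dots,\lfloor n/2\rfloor$, then $\|M_{r,\xi}(f)-f\|_1\to0$ as $\xi\to0$.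
   Context: For $r\in\mathbb{N}$ and $n\in\mathbb{Z}_+$ set $\alpha_j=(-1)^{r-j}\binom{r}{j}j^{-n}$ for $j=1,\dots,r$ and $\alpha_0=1-\sum_{j=1}^r(-1)^{r-j}\binom{r}{j}j^{-n}$. For $\alpha\in\mathbb{N}$, $\beta>\frac{1}{2\alpha}$, $\xi>0$, let $W=\frac{\Gamma(\beta)\alpha\xi^{2\alpha\beta-1}}{\Gamma(\frac{1}{2\alpha})\Gamma(\beta-\frac{1}{2\alpha})}$ and $M_{r,\xi}(f;x)=W\int_{-\infty}^{\infty}\frac{\sum_{j=0}^r\alpha_jf(x+jt)}{(t^{2\alpha}+\xi^{2\alpha})^{\beta}}dt$, $x\in\mathbb{R}$. Let $\delta_k=\sum_{j=1}^r\alpha_j j^k$ and $$\Delta(x):=M_{r,\xi}(f;x)-f(x)-\sum_{m=1}^{\lfloor n/2\rfloor}\frac{f^{(2m)}(x)\delta_{2m}}{(2m)!}\frac{\Gamma(\frac{2m+1}{2\alpha})\Gamma(\beta-\frac{2m+1}{2\alpha})}{\Gamma(\frac{1}{2\alpha})\Gamma(\beta-\frac{1}{2\alpha})}\xi^{2m}$$ (empty sum if $n=1$). For $g\in L_1(\mathbb{R})$, $\Delta_t^rg(x)=\sum_{j=0}^r(-1)^{r-j}\binom{r}{j}g(x+jt)$ and $\omega_r(g,h)_1=\sup_{|t|\le h}\|\Delta_t^rg(x)\|_{1,x}$, $h>0$. $\|\cdot\|_1$ is the $L_1(\mathbb{R})$ norm in $x$. *)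

theory Defs
  imports "HOL-Analysis.Analysis"
begin

definition alpha_coef :: "nat \<Rightarrow> nat \<Rightarrow> nat \<Rightarrow> real" where
  "alpha_coef r n j =
     (if j = 0 then 1 - (\<Sum>i=1..r. (-1)^(r-i) * real (r choose i) / real i ^ n)
      else (-1)^(r-j) * real (r choose j) / real j ^ n)"

definition delta_coef :: "nat \<Rightarrow> nat \<Rightarrow> nat \<Rightarrow> real" where
  "delta_coef r n k = (\<Sum>j=1..r. alpha_coef r n j * real j ^ k)"

definition W_const :: "nat \<Rightarrow> real \<Rightarrow> real \<Rightarrow> real" where
  "W_const al be xi =
     Gamma be * real al * xi powr (2 * real al * be - 1)
     / (Gamma (1 / (2 * real al)) * Gamma (be - 1 / (2 * real al)))"

definition M_op :: "nat \<Rightarrow> nat \<Rightarrow> nat \<Rightarrow> real \<Rightarrow> real \<Rightarrow> (real \<Rightarrow> real) \<Rightarrow> real \<Rightarrow> real" where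
  "M_op r n al be xi f x =
     W_const al be xi *
       (LINT t|lborel. (\<Sum>j=0..r. alpha_coef r n j * f (x + real j * t))
                      / (t ^ (2 * al) + xi ^ (2 * al)) powr be)"

definition Delta_op :: "nat \<Rightarrow> nat \<Rightarrow> nat \<Rightarrow> real \<Rightarrow> real \<Rightarrow> (real \<Rightarrow> real) \<Rightarrow> real \<Rightarrow> real" where
  "Delta_op r n al be xi f x =
     M_op r n al be xi f x - f x
     - (\<Sum>m=1..n div 2. (deriv ^^ (2*m)) f x * delta_coef r n (2*m) / fact (2*m)
          * (Gamma (real (2*m+1) / (2 * real al)) * Gamma (be - real (2*m+1) / (2 * real al))
             / (Gamma (1 / (2 * real al)) * Gamma (be - 1 / (2 * real al))))
          * xi ^ (2*m))"

definition fdiff :: "nat \<Rightarrow> real \<Rightarrow> (real \<Rightarrow> real) \<Rightarrow> real \<Rightarrow> real" where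
  "fdiff r t g x = (\<Sum>j=0..r. (-1)^(r-j) * real (r choose j) * g (x + real j * t))"

definition L1norm :: "(real \<Rightarrow> real) \<Rightarrow> ennreal" where
  "L1norm g = (\<integral>\<^sup>+ x. ennreal \<bar>g x\<bar> \<partial>lborel)"

definition omega1 :: "nat \<Rightarrow> (real \<Rightarrow> real) \<Rightarrow> real \<Rightarrow> ennreal" where
  "omega1 r g h = (SUP t\<in>{-h..h}. L1norm (fdiff r t g))"

definition bound_const :: "nat \<Rightarrow> nat \<Rightarrow> nat \<Rightarrow> real \<Rightarrow> real" where
  "bound_const r n al be =
     1 / (real (r+1) * fact (n-1) * Gamma (1 / (2 * real al)) * Gamma (be - 1 / (2 * real al)))
     * (\<Sum>k=1..r+1. real ((r+1) choose k) * Gamma (real (n+k) / (2 * real al))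
                      * Gamma (be - real (n+k) / (2 * real al)))"

end

theory Submission
  imports Defs
begin

lemma beta_half_line:
  fixes p al :: nat and be xi :: real
  assumes al: "al \<ge> 1" and xi: "xi > 0" and be: "be > real (p+1) / (2 * real al)"
  shows "((\<lambda>t. t^p / (t^(2*al) + xi^(2*al)) powr be) has_integral
          (1/(2*real al) * xi powr (real p + 1 - 2*real al*be) *
           Beta (real (p+1) / (2 * real al)) (be - real (p+1) / (2 * real al)))) {0<..}"
proof -
  define c where "c = 1/(2*real al)"
  define a where "a = real (p+1) / (2 * real al)"
  have c: "c > 0" using al by (simp add: c_def)
  have a: "a > 0" using al by (simp add: a_def)
  have ba: "be - a > 0" using be by (simp add: a_def)
  have ac: "a = c * (real p + 1)" by (simp add: a_def c_def)
  define g where "g w = xi * (w/(1-w)) powr c" for w :: real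
  define g' where "g' w = xi * c * (w/(1-w)) powr (c - 1) / (1-w)^2" for w :: real
  define S where "S = {0<..<(1::real)}"
  define F where "F t = t^p / (t^(2*al) + xi^(2*al)) powr be" for t :: real
  define C where "C = c * xi powr (real p + 1 - 2*real al*be)"
  have der: "(g has_field_derivative g' w) (at w within S)" if "w \<in> S" for w
  proof -
    from that have w: "0 < w" "w < 1" by (auto simp: S_def)
    have "((\<lambda>w. w/(1-w)) has_field_derivative 1/(1-w)^2) (at w)"
      using w by (auto intro!: derivative_eq_intros simp: field_simps power2_eq_square)
    then have "((\<lambda>w. xi * (w/(1-w)) powr c) has_field_derivative
        xi * (c * (w/(1-w)) powr (c - 1) * (1/(1-w)^2))) (at w)"
      using w by (auto intro!: derivative_eq_intros DERIV_powr simp: power2_eq_square)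
    then show ?thesis unfolding g_def g'_def
      by (auto intro: has_field_derivative_at_within simp: field_simps power2_eq_square)
  qed
  have gpos: "g w > 0" if "w \<in> S" for w using that xi by (auto simp: g_def S_def)
  have inj: "inj_on g S"
  proof (rule strict_mono_on_imp_inj_on, rule strict_mono_onI)
    fix u v assume "u \<in> S" "v \<in> S" "u < v"
    then have "u/(1-u) < v/(1-v)" by (auto simp: S_def field_simps)
    moreover have "u/(1-u) > 0" using \<open>u\<in>S\<close> by (auto simp: S_def)
    ultimately have "(u/(1-u)) powr c < (v/(1-v)) powr c" using c by (intro powr_less_mono2) auto
    then show "g u < g v" using xi by (simp add: g_def)
  qed
  have img: "g ` S = {0<..}"
  proof
    show "g ` S \<subseteq> {0<..}" using gpos by auto
    show "{0<..} \<subseteq> g ` S"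
    proof
      fix v :: real assume "v \<in> {0<..}"
      then have v: "v > 0" by simp
      define q where "q = (v/xi) powr (2*real al)"
      have q: "q > 0" using v xi by (simp add: q_def)
      define w where "w = q/(1+q)"
      have wS: "w \<in> S" using q by (simp add: w_def S_def)
      have "w/(1-w) = q" using q by (simp add: w_def field_simps)
      then have "g w = xi * q powr c" by (simp add: g_def)
      also have "q powr c = v/xi" using v xi al
        by (simp add: q_def c_def powr_powr)
      finally have "g w = v" using xi by simp
      then show "v \<in> g ` S" using wS by blast
    qed
  qed
  have key: "\<bar>g' w\<bar> * F (g w) = C * (w powr (a - 1) * (1 - w) powr (be - a - 1))" if "w \<in> S" for w
  proof -
    from that have w: "0 < w" "w < 1" by (auto simp: S_def)
    define q where "q = w/(1-w)"
    have q: "q > 0" using w by (simp add: q_def)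
    have omw: "1 - w > 0" using w by simp
    have g'pos: "g' w > 0" using w xi c by (simp add: g'_def)
    have gw: "g w = xi * q powr c" by (simp add: g_def q_def)
    have Qp: "(q powr c)^p = q powr (c * real p)"
      using q by (simp add: powr_realpow[symmetric] powr_powr mult.commute)
    have Q2: "(q powr c)^(2*al) = q"
      using q al by (simp add: powr_realpow[symmetric] powr_powr c_def)
    have sum: "g w ^(2*al) + xi^(2*al) = xi^(2*al) / (1 - w)"
    proof -
      have "g w ^(2*al) = xi^(2*al) * q" by (simp add: gw power_mult_distrib Q2)
      then show ?thesis using w by (simp add: q_def field_simps)
    qed
    have K: "(g w ^(2*al) + xi^(2*al)) powr be = xi powr (2*real al*be) * (1-w) powr (-be)"
      using xi omw unfolding sum by (simp add: powr_divide powr_realpow[symmetric] powr_powr powr_minus_divide)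
    have "\<bar>g' w\<bar> * F (g w) = g' w * (xi^p * q powr (c*real p)) / (xi powr (2*real al*be) * (1-w) powr (-be))"
    proof -
      have "F (g w) = (g w)^p / (xi powr (2*real al*be) * (1-w) powr (-be))" by (simp only: F_def K)
      then show ?thesis using g'pos by (simp add: gw power_mult_distrib Qp)
    qed
    also have "\<dots> = c * (xi * xi^p / xi powr (2*real al*be)) * (q powr (c - 1) * q powr (c * real p)) * ((1-w) powr be / (1-w)^2)"
      using omw by (simp add: g'_def q_def powr_minus_divide field_simps)
    also have "q powr (c - 1) * q powr (c * real p) = q powr (a - 1)"
      by (simp add: powr_add[symmetric] ac algebra_simps)
    also have "q powr (a - 1) = w powr (a - 1) * (1-w) powr (1 - a)"
    proof -
      have "(1-w) powr (1-a) = 1/(1-w) powr (a-1)" using powr_minus_divide[of "1-w" "a-1"] by simp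
      then show ?thesis using w by (simp add: q_def powr_divide)
    qed
    also have "xi * xi^p / xi powr (2*real al*be) = xi powr (real p + 1 - 2*real al*be)"
    proof -
      have "xi powr (real p + 1 - 2*real al*be) = xi powr (real (Suc p)) / xi powr (2*real al*be)"
        by (simp add: powr_diff add.commute)
      also have "xi powr real (Suc p) = xi^(Suc p)" using xi by (rule powr_realpow)
      finally show ?thesis by simp
    qed
    also have "(1-w) powr be / (1-w)^2 = (1-w) powr (be - 2)"
      using omw by (simp add: powr_diff powr_numeral)
    finally have "\<bar>g' w\<bar> * F (g w) = c * xi powr (real p + 1 - 2*real al*be) * (w powr (a - 1) * ((1-w) powr (1 - a) * (1-w) powr (be - 2)))"
      by (simp add: ac_simps)
    also have "(1-w) powr (1 - a) * (1-w) powr (be - 2) = (1 - w) powr (be - a - 1)"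
      by (simp add: powr_add[symmetric])
    finally show ?thesis by (simp add: C_def)
  qed
  have beta: "((\<lambda>w. C * (w powr (a - 1) * (1 - w) powr (be - a - 1))) has_integral C * Beta a (be - a)) S"
  proof -
    have "((\<lambda>w. w powr (a - 1) * (1 - w) powr ((be - a) - 1)) has_integral Beta a (be - a)) {0..1}"
      by (rule has_integral_Beta_real[OF a ba])
    then have "((\<lambda>w. w powr (a - 1) * (1 - w) powr (be - a - 1)) has_integral Beta a (be - a)) S"
      unfolding S_def by (simp add: has_integral_Icc_iff_Ioo)
    then show ?thesis by (rule has_integral_mult_right)
  qed
  have Cpos: "C \<ge> 0" using c by (simp add: C_def)
  have absint: "(\<lambda>w. \<bar>g' w\<bar> * F (g w)) absolutely_integrable_on S"
  proof -
    have "(\<lambda>w. C * (w powr (a - 1) * (1 - w) powr (be - a - 1))) absolutely_integrable_on S"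
      using beta Cpos by (subst absolutely_integrable_on_iff_nonneg) (auto simp: S_def)
    then show ?thesis
      by (rule absolutely_integrable_spike[where S = "{}"]) (auto simp: key)
  qed
  have intg: "integral S (\<lambda>w. \<bar>g' w\<bar> * F (g w)) = C * Beta a (be - a)"
    using beta key by (metis (no_types, lifting) integral_cong integral_unique)
  have "F absolutely_integrable_on (g ` S) \<and> integral (g ` S) F = C * Beta a (be - a)"
    using has_absolute_integral_change_of_variables_1'[of S g g' F "C * Beta a (be - a)"] 
      der inj absint intg by (auto simp: S_def)
  then have "(F has_integral C * Beta a (be - a)) {0<..}"
    using img by (metis absolutely_integrable_on_def has_integral_integrable_integral)
  moreover have "F = (\<lambda>t. t^p / (t^(2*al) + xi^(2*al)) powr be)" by (rule ext) (simp add: F_def)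
  ultimately show ?thesis by (simp add: C_def c_def a_def)
qed

definition ker :: "nat \<Rightarrow> real \<Rightarrow> real \<Rightarrow> real \<Rightarrow> real" where
  "ker al be xi t = (t^(2*al) + xi^(2*al)) powr be"
lemma even_pow_nonneg: "(t::real)^(2*al) \<ge> 0"
  by (simp add: power_mult)
lemma ker_pos: "xi > 0 \<Longrightarrow> ker al be xi t > 0"
proof -
  assume xi: "xi > 0"
  have "xi^(2*al) > 0" using xi by simp
  then have "t^(2*al) + xi^(2*al) \<noteq> 0" using even_pow_nonneg[of t al] by linarith
  then show ?thesis unfolding ker_def by simp
qed
lemma ker_even: "ker al be xi (-t) = ker al be xi t"
  unfolding ker_def by (simp add: power_mult)
lemma ker_measurable[measurable]: "ker al be xi \<in> borel_measurable borel"
  unfolding ker_def by measurable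
definition momc :: "nat \<Rightarrow> real \<Rightarrow> real \<Rightarrow> nat \<Rightarrow> real" where
  "momc al be xi p = 1/real al * xi powr (real p + 1 - 2*real al*be) *
      Beta (real (p+1) / (2 * real al)) (be - real (p+1) / (2 * real al))"

lemma moment_nn:
  fixes p al :: nat and be xi :: real
  assumes al: "al \<ge> 1" and xi: "xi > 0" and be: "be > real (p+1) / (2 * real al)"
  shows "(\<integral>\<^sup>+t. ennreal (\<bar>t\<bar>^p / ker al be xi t) \<partial>lborel) = ennreal (momc al be xi p)"
proof -
  define h where "h = (\<lambda>t. t^p / ker al be xi t)"
  define I where "I = 1/(2*real al) * xi powr (real p + 1 - 2*real al*be) *
           Beta (real (p+1) / (2 * real al)) (be - real (p+1) / (2 * real al))"
  have hi: "(h has_integral I) {0<..}"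
    using beta_half_line[OF al xi be] by (simp add: h_def I_def ker_def)
  have hm[measurable]: "h \<in> borel_measurable borel" unfolding h_def by measurable
  have h0: "(\<integral>\<^sup>+t. ennreal (indicator {0<..} t * h t) \<partial>lborel) = ennreal I"
    by (rule nn_integral_has_integral_lebesgue[OF _ hi]) (auto simp: h_def ker_pos[OF xi] less_imp_le)
  have h1: "(\<integral>\<^sup>+t. ennreal (indicator {0<..} (-t) * h (-t)) \<partial>lborel) = ennreal I"
  proof -
    have "(\<integral>\<^sup>+t. ennreal (indicator {0<..} t * h t) \<partial>lborel) =
          ennreal \<bar>-1\<bar> * (\<integral>\<^sup>+t. ennreal (indicator {0<..} (0 + -1 * t) * h (0 + -1*t)) \<partial>lborel)"
      by (rule nn_integral_real_affine) auto
    then show ?thesis using h0 by simp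
  qed
  have "(\<integral>\<^sup>+t. ennreal (\<bar>t\<bar>^p / ker al be xi t) \<partial>lborel) =
        (\<integral>\<^sup>+t. ennreal (indicator {0<..} t * h t) + ennreal (indicator {0<..} (-t) * h (-t)) \<partial>lborel)"
  proof (intro nn_integral_cong_AE eventually_mono[OF AE_lborel_singleton[of 0]])
    fix t :: real assume "t \<noteq> 0"
    then show "ennreal (\<bar>t\<bar>^p / ker al be xi t) =
        ennreal (indicator {0<..} t * h t) + ennreal (indicator {0<..} (-t) * h (-t))"
      by (cases "t > 0") (auto simp: h_def ker_even indicator_def power_minus_odd)
  qed
  also have "\<dots> = ennreal I + ennreal I"
    by (subst nn_integral_add) (auto simp: h0 h1)
  also have "\<dots> = ennreal (I + I)"
  proof -
    have "real (p+1) / (2 * real al) > 0" using al by simp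
    then have "Beta (real (p+1) / (2 * real al)) (be - real (p+1) / (2 * real al)) > 0"
      using be by (simp add: Beta_def)
    then have "I \<ge> 0" using xi by (simp add: I_def)
    then show ?thesis by (metis ennreal_plus)
  qed
  also have "I + I = momc al be xi p" using al by (simp add: I_def momc_def)
  finally show ?thesis .
qed


lemma moment_int:
  fixes k al :: nat and be xi :: real
  assumes al: "al \<ge> 1" and xi: "xi > 0" and be: "be > real (k+1) / (2 * real al)"
  shows "integrable lborel (\<lambda>t. t^k / ker al be xi t)"
    and "(LINT t|lborel. t^k / ker al be xi t) = (if even k then momc al be xi k else 0)"
proof -
  note kp = ker_pos[OF xi]
  have nn: "(\<integral>\<^sup>+t. ennreal (norm (t^k / ker al be xi t)) \<partial>lborel) = ennreal (momc al be xi k)"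
    using moment_nn[OF al xi be] kp by (simp add: abs_mult power_abs abs_of_pos)
  show int: "integrable lborel (\<lambda>t. t^k / ker al be xi t)"
    by (rule integrableI_bounded, measurable, subst nn, simp)
  show "(LINT t|lborel. t^k / ker al be xi t) = (if even k then momc al be xi k else 0)"
  proof (cases "even k")
    case True
    then have "(\<integral>\<^sup>+t. ennreal (t^k / ker al be xi t) \<partial>lborel) = ennreal (momc al be xi k)"
      using moment_nn[OF al xi be] by (simp add: power_even_abs)
    moreover have "(\<integral>\<^sup>+t. ennreal (t^k / ker al be xi t) \<partial>lborel) = ennreal (LINT t|lborel. t^k / ker al be xi t)"
      using True kp by (intro nn_integral_eq_integral int) (auto intro!: AE_I2 simp: zero_le_even_power less_imp_le)
    moreover have "momc al be xi k \<ge> 0"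
    proof -
      have "real (k+1) / (2 * real al) > 0" using al by simp
      then have "Beta (real (k+1) / (2 * real al)) (be - real (k+1) / (2 * real al)) > 0"
        using be by (simp add: Beta_def)
      then show ?thesis using xi by (simp add: momc_def)
    qed
    moreover have "(LINT t|lborel. t^k / ker al be xi t) \<ge> 0"
      using True kp by (intro integral_nonneg_AE) (auto intro!: AE_I2 simp: zero_le_even_power less_imp_le)
    ultimately show ?thesis using True by simp
  next
    case False
    have "(LINT t|lborel. t^k / ker al be xi t) = \<bar>-1\<bar> *\<^sub>R (LINT t|lborel. (0 + -1*t)^k / ker al be xi (0 + -1*t))"
      by (rule lborel_integral_real_affine) simp
    also have "\<dots> = - (LINT t|lborel. t^k / ker al be xi t)"
      using False by (simp add: ker_even)
    finally show ?thesis using False by simp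
  qed
qed

lemma W_momc:
  fixes k al :: nat and be xi :: real
  assumes al: "al \<ge> 1" and xi: "xi > 0" and be: "be > real (k+1) / (2 * real al)"
  shows "W_const al be xi * momc al be xi k = xi^k *
     (Gamma (real (k+1) / (2 * real al)) * Gamma (be - real (k+1) / (2 * real al))
      / (Gamma (1 / (2 * real al)) * Gamma (be - 1 / (2 * real al))))"
proof -
  have "real (k+1) / (2 * real al) > 0" using al by simp
  then have bpos: "be > 0" using be by linarith
  have G: "Gamma be \<noteq> 0" using bpos by (metis Gamma_real_pos less_irrefl)
  have "xi powr (2 * real al * be - 1) * xi powr (real k + 1 - 2*real al*be) = xi powr (real k)"
    by (simp add: powr_add[symmetric])
  also have "\<dots> = xi^k" using xi by (simp add: powr_realpow)
  finally have P: "xi powr (2 * real al * be - 1) * xi powr (real k + 1 - 2*real al*be) = xi^k" .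
  show ?thesis
    using al G unfolding W_const_def momc_def Beta_def
    by (simp add: P[symmetric] field_simps)
qed

lemma taylor_int:
  fixes f :: "real \<Rightarrow> real" and n :: nat
  assumes n: "n \<ge> 1"
    and D: "\<And>k x. k < n \<Longrightarrow> ((deriv ^^ k) f has_real_derivative (deriv ^^ Suc k) f x) (at x)"
  shows "((\<lambda>u. s^n / fact (n-1) * ((1-u)^(n-1) * (deriv ^^ n) f (x + u * s))) has_integral
           (f (x+s) - (\<Sum>k<n. (deriv ^^ k) f x * s^k / fact k))) {0..1}"
proof -
  define F where "F k = (deriv ^^ k) f" for k
  define phi where "phi u = (\<Sum>k<n. F k (x+u * s) * (1-u)^k * s^k / fact k)" for u
  define b where "b k u = (if k = 0 then 0 else F k (x+u * s) * (1-u)^(k-1) * s^k / fact (k-1))" for k u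
  have d: "((\<lambda>u. F k (x+u * s) * (1-u)^k * s^k / fact k) has_real_derivative (b (Suc k) u - b k u)) (at u)"
    if k: "k < n" for k u
  proof -
    have Fd: "((\<lambda>u. F k (x+u * s)) has_real_derivative F (Suc k) (x+u * s) * s) (at u)"
    proof -
      have "((\<lambda>u. x+u * s) has_real_derivative s) (at u)" by (auto intro!: derivative_eq_intros)
      from DERIV_chain2[OF D[OF k, of "x+u * s"] this] show ?thesis by (simp add: F_def)
    qed
    have "((\<lambda>u. F k (x+u * s) * (1-u)^k * s^k / fact k) has_real_derivative
       (F (Suc k) (x+u * s) * s * (1-u)^k * s^k / fact k - F k (x+u * s) * (real k * (1-u)^(k-1)) * s^k / fact k)) (at u)"
      by (auto intro!: derivative_eq_intros Fd simp: field_simps)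
    moreover have "F (Suc k) (x+u * s) * s * (1-u)^k * s^k / fact k - F k (x+u * s) * (real k * (1-u)^(k-1)) * s^k / fact k
        = b (Suc k) u - b k u"
    proof -
      have 1: "F (Suc k) (x+u * s) * s * (1-u)^k * s^k / fact k = b (Suc k) u"
        by (simp add: b_def)
      have 2: "F k (x+u * s) * (real k * (1-u)^(k-1)) * s^k / fact k = b k u"
      proof (cases k)
        case 0 then show ?thesis by (simp add: b_def)
      next
        case (Suc j)
        have "real k / fact k = 1 / fact j" using Suc by (simp add: fact_Suc divide_simps del: of_nat_Suc)
        then have "F k (x+u * s) * (real k * (1-u)^(k-1)) * s^k / fact k
            = F k (x+u * s) * (1-u)^(k-1) * s^k * (real k / fact k)" by (simp add: field_simps)
        also have "\<dots> = b k u" using Suc \<open>real k / fact k = 1 / fact j\<close> by (simp add: b_def)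
        finally show ?thesis .
      qed
      show ?thesis using 1 2 by simp
    qed
    ultimately show ?thesis by simp
  qed
  have dphi: "(phi has_real_derivative (b n u)) (at u)" for u
  proof -
    have "(phi has_real_derivative (\<Sum>k<n. b (Suc k) u - b k u)) (at u)"
      unfolding phi_def by (intro DERIV_sum d) simp
    moreover have "(\<Sum>k<n. b (Suc k) u - b k u) = b n u"
      by (subst sum_lessThan_telescope) (simp add: b_def)
    ultimately show ?thesis by simp
  qed
  have "((\<lambda>u. b n u) has_integral (phi 1 - phi 0)) {0..1}"
    by (intro fundamental_theorem_of_calculus)
       (auto intro: has_field_derivative_at_within dphi simp: has_real_derivative_iff_has_vector_derivative[symmetric])
  moreover have "phi 1 = f (x+s)"
  proof -
    have "phi 1 = (\<Sum>k<n. if k = 0 then f (x+s) else 0)"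
      unfolding phi_def by (intro sum.cong) (auto simp: F_def)
    also have "\<dots> = f (x+s)" using n by (simp add: sum.delta)
    finally show ?thesis .
  qed
  moreover have "phi 0 = (\<Sum>k<n. (deriv ^^ k) f x * s^k / fact k)"
    by (simp add: phi_def F_def)
  moreover have "b n u = s^n / fact (n-1) * ((1-u)^(n-1) * (deriv ^^ n) f (x + u * s))" for u
    using n by (simp add: b_def F_def)
  ultimately show ?thesis by simp
qed

lemma alt_sum_0:
  assumes "r \<ge> 1"
  shows "(\<Sum>j=0..r. (-1::real)^(r-j) * real (r choose j)) = 0"
proof -
  have "(\<Sum>j=0..r. (-1::real)^(r-j) * real (r choose j)) = (\<Sum>j\<le>r. (-1)^r * ((-1)^j * real (r choose j)))"
  proof (intro sum.cong)
    fix j assume "j \<in> {..r}"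
    then have j: "j \<le> r" by simp
    have e1: "(-1::real)^r = (-1)^(r-j) * (-1)^j" using j by (simp flip: power_add)
    have e2: "(-1::real)^j * (-1)^j = 1" by (simp flip: power_mult_distrib)
    have "(-1::real)^r * (-1)^j = (-1)^(r-j) * ((-1)^j * (-1)^j)" unfolding e1 by (simp only: mult.assoc)
    then have "(-1::real)^(r-j) = (-1)^r * (-1)^j" using e2 by simp
    then show "(-1::real)^(r-j) * real (r choose j) = (-1)^r * ((-1)^j * real (r choose j))" by simp
  qed (auto simp: atMost_atLeast0)
  also have "\<dots> = (-1)^r * (\<Sum>j\<le>r. (-1)^j * real (r choose j))" by (simp add: sum_distrib_left)
  also have "\<dots> = 0" using assms choose_alternating_sum[of r] by simp
  finally show ?thesis .
qed

lemma alt_sum_1: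
  assumes "r \<ge> 1"
  shows "(\<Sum>j=1..r. (-1::real)^(r-j) * real (r choose j)) = - ((-1)^r)"
proof -
  have "(\<Sum>j=0..r. (-1::real)^(r-j) * real (r choose j)) = (-1)^r + (\<Sum>j=1..r. (-1::real)^(r-j) * real (r choose j))"
    by (simp add: sum.atLeast_Suc_atMost)
  then show ?thesis using alt_sum_0[OF assms] by simp
qed

lemma alpha_j: "j \<ge> 1 \<Longrightarrow> alpha_coef r n j * real j ^ n = (-1)^(r-j) * real (r choose j)"
  by (simp add: alpha_coef_def)

lemma alpha_0: "alpha_coef r n 0 = 1 - (\<Sum>j=1..r. alpha_coef r n j)"
  by (simp add: alpha_coef_def)

lemma delta_n: "r \<ge> 1 \<Longrightarrow> delta_coef r n n = - ((-1)^r)"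
  unfolding delta_coef_def using alt_sum_1[of r] by (simp add: alpha_j)

lemma poly_int: "n \<ge> 1 \<Longrightarrow> ((\<lambda>u::real. (1-u)^(n-1)) has_integral 1 / real n) {0..1}"
proof -
  assume n: "n \<ge> 1"
  have "((\<lambda>u::real. (1-u)^(n-1)) has_integral (G 1 - G 0)) {0..1}"
    if G: "G = (\<lambda>u. -((1-u)^n) / real n)" for G
  proof (intro fundamental_theorem_of_calculus)
    fix u :: real
    have "((\<lambda>u. -((1-u)^n) / real n) has_real_derivative (1-u)^(n-1)) (at u)"
      using n by (auto intro!: derivative_eq_intros)
    then show "(G has_vector_derivative (1-u)^(n-1)) (at u within {0..1})"
      by (simp add: G has_real_derivative_iff_has_vector_derivative[symmetric] has_field_derivative_at_within)
  qed simp
  from this[OF refl] show ?thesis using n by (simp add: zero_power)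
qed


definition Erem :: "nat \<Rightarrow> nat \<Rightarrow> (real \<Rightarrow> real) \<Rightarrow> real \<Rightarrow> real \<Rightarrow> real" where
  "Erem r n f x t = (\<Sum>j=0..r. alpha_coef r n j * f (x + real j * t)) - f x
     - (\<Sum>k=1..n. (deriv ^^ k) f x * t^k * delta_coef r n k / fact k)"

lemma E_formula:
  fixes f :: "real \<Rightarrow> real" and r n :: nat
  assumes r: "r \<ge> 1" and n: "n \<ge> 1"
    and D: "\<And>k x. k < n \<Longrightarrow> ((deriv ^^ k) f has_real_derivative (deriv ^^ Suc k) f x) (at x)"
  shows "((\<lambda>u. t^n / fact (n-1) * ((1-u)^(n-1) * fdiff r (u * t) ((deriv ^^ n) f) x)) has_integral
           Erem r n f x t) {0..1}"
proof -
  define F where "F k = (deriv ^^ k) f" for k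
  define g where "g = F n"
  define a where "a = alpha_coef r n"
  define h where "h j u = (real j * t)^n / fact (n-1) * ((1-u)^(n-1) * g (x + u * (real j * t)))" for j u
  define I where "I j = f (x + real j * t) - (\<Sum>k<n. F k x * (real j * t)^k / fact k)" for j
  define c where "c k = F k x * t^k * delta_coef r n k / fact k" for k
  have hI: "(h j has_integral I j) {0..1}" for j
    unfolding h_def I_def g_def F_def using taylor_int[OF n D] by blast
  have S: "((\<lambda>u. (\<Sum>j=1..r. a j * h j u) + t^n / fact (n-1) * (-1)^r * g x * (1-u)^(n-1)) has_integral
           ((\<Sum>j=1..r. a j * I j) + t^n / fact (n-1) * (-1)^r * g x * (1 / real n))) {0..1}"
    by (intro has_integral_add has_integral_sum has_integral_mult_right hI poly_int n) auto
  have pt: "t^n / fact (n-1) * ((1-u)^(n-1) * fdiff r (u * t) g x) =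
           (\<Sum>j=1..r. a j * h j u) + t^n / fact (n-1) * (-1)^r * g x * (1-u)^(n-1)" for u
  proof -
    have "fdiff r (u * t) g x = (-1)^r * g x + (\<Sum>j=1..r. (-1)^(r-j) * real (r choose j) * g (x + real j * (u * t)))"
      unfolding fdiff_def by (simp add: sum.atLeast_Suc_atMost)
    moreover have "a j * h j u = t^n / fact (n-1) * ((1-u)^(n-1) * ((-1)^(r-j) * real (r choose j) * g (x + real j * (u * t))))"
      if "j \<in> {1..r}" for j
    proof -
      have "a j * (real j * t)^n = (-1)^(r-j) * real (r choose j) * t^n"
        using that alpha_j[of j r n] by (simp add: a_def power_mult_distrib)
      then show ?thesis unfolding h_def by (auto simp: field_simps)
    qed
    ultimately show ?thesis by (simp add: sum_distrib_left algebra_simps)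
  qed
  have val: "(\<Sum>j=1..r. a j * I j) + t^n / fact (n-1) * (-1)^r * g x * (1 / real n) = Erem r n f x t"
  proof -
    have A: "(\<Sum>j=1..r. a j * I j) = (\<Sum>j=1..r. a j * f (x + real j * t)) - (\<Sum>k<n. c k)"
    proof -
      have "(\<Sum>j=1..r. a j * (\<Sum>k<n. F k x * (real j * t)^k / fact k)) =
            (\<Sum>j=1..r. \<Sum>k<n. a j * real j ^ k * (F k x * t^k / fact k))"
        by (simp add: sum_distrib_left power_mult_distrib algebra_simps)
      also have "\<dots> = (\<Sum>k<n. \<Sum>j=1..r. a j * real j ^ k * (F k x * t^k / fact k))"
        by (rule sum.swap)
      also have "\<dots> = (\<Sum>k<n. (\<Sum>j=1..r. a j * real j ^ k) * (F k x * t^k / fact k))"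
        by (simp only: sum_distrib_right)
      also have "\<dots> = (\<Sum>k<n. c k)"
        by (intro sum.cong refl) (simp add: c_def delta_coef_def a_def mult_ac)
      finally show ?thesis by (simp add: I_def algebra_simps sum_subtractf)
    qed
    have B: "(\<Sum>k<n. c k) = c 0 + (\<Sum>k=1..n. c k) - c n"
    proof -
      have "(\<Sum>k<Suc n. c k) = c 0 + (\<Sum>k<n. c (Suc k))" by (rule sum.lessThan_Suc_shift)
      also have "(\<Sum>k<n. c (Suc k)) = (\<Sum>k=1..n. c k)" by (simp add: sum.atLeast1_atMost_eq)
      finally show ?thesis by simp
    qed
    have c0: "c 0 = f x * (1 - a 0)"
      by (simp add: c_def F_def delta_coef_def alpha_0 a_def)
    have cn: "c n = - (g x * t^n * (-1)^r / fact n)"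
      by (simp add: c_def g_def delta_n[OF r])
    have fn: "fact n = real n * fact (n-1)" using n by (cases n) (simp_all add: fact_Suc)
    have E: "Erem r n f x t = a 0 * f x + (\<Sum>j=1..r. a j * f (x + real j * t)) - f x - (\<Sum>k=1..n. c k)"
      unfolding Erem_def by (simp add: sum.atLeast_Suc_atMost a_def c_def F_def)
    show ?thesis unfolding E A B c0 cn fn using n by (simp add: field_simps)
  qed
  have ext: "(\<lambda>u. t^n / fact (n-1) * ((1-u)^(n-1) * fdiff r (u * t) g x)) =
     (\<lambda>u. (\<Sum>j=1..r. a j * h j u) + t^n / fact (n-1) * (-1)^r * g x * (1-u)^(n-1))"
    by (rule ext) (rule pt)
  show ?thesis using S unfolding ext[symmetric] val by (simp add: g_def F_def)
qed

lemma fdiff_Suc: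
  "fdiff (Suc r) t g x = fdiff r t g (x + t) - fdiff r t g x"
proof -
  define G where "G j = g (x + real j * t)" for j
  have L: "fdiff (Suc r) t g x = (\<Sum>j\<le>Suc r. (-1)^(Suc r - j) * real (Suc r choose j) * G j)"
    by (simp add: fdiff_def G_def atLeast0AtMost)
  also have "\<dots> = (-1)^(Suc r) * G 0 + (\<Sum>j\<le>r. (-1)^(r - j) * real (Suc r choose Suc j) * G (Suc j))"
    by (subst sum.atMost_Suc_shift) simp
  also have "(\<Sum>j\<le>r. (-1)^(r - j) * real (Suc r choose Suc j) * G (Suc j)) =
     (\<Sum>j\<le>r. (-1)^(r - j) * real (r choose j) * G (Suc j)) +
     (\<Sum>j\<le>r. (-1)^(r - j) * real (r choose Suc j) * G (Suc j))"
    by (simp add: sum.distrib[symmetric] algebra_simps)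
  also have "(\<Sum>j\<le>r. (-1)^(r - j) * real (r choose j) * G (Suc j)) = fdiff r t g (x + t)"
    by (simp add: fdiff_def G_def atLeast0AtMost algebra_simps)
  also have "(\<Sum>j\<le>r. (-1::real)^(r - j) * real (r choose Suc j) * G (Suc j)) =
      (\<Sum>j<r. (-1)^(r - j) * real (r choose Suc j) * G (Suc j))"
    by (simp add: lessThan_Suc_atMost[symmetric])
  also have "(-1)^(Suc r) * G 0 + (fdiff r t g (x + t) + (\<Sum>j<r. (-1)^(r - j) * real (r choose Suc j) * G (Suc j)))
      = fdiff r t g (x + t) - ((-1)^r * G 0 + (\<Sum>j<r. (-1)^(r - Suc j) * real (r choose Suc j) * G (Suc j)))"
  proof -
    have "(\<Sum>j<r. (-1::real)^(r - j) * real (r choose Suc j) * G (Suc j)) =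
          - (\<Sum>j<r. (-1)^(r - Suc j) * real (r choose Suc j) * G (Suc j))"
    proof -
      have "(-1::real)^(r - j) = - ((-1)^(r - Suc j))" if "j < r" for j
        using that by (metis Suc_diff_Suc mult_minus1 power_Suc)
      then show ?thesis by (simp add: sum_negf[symmetric])
    qed
    then show ?thesis by simp
  qed
  also have "(-1)^r * G 0 + (\<Sum>j<r. (-1)^(r - Suc j) * real (r choose Suc j) * G (Suc j)) = fdiff r t g x"
  proof -
    have "fdiff r t g x = (\<Sum>j\<le>r. (-1)^(r - j) * real (r choose j) * G j)"
      by (simp add: fdiff_def G_def atLeast0AtMost)
    also have "\<dots> = (\<Sum>j<Suc r. (-1)^(r - j) * real (r choose j) * G j)"
      by (simp add: lessThan_Suc_atMost)
    also have "\<dots> = (-1)^r * G 0 + (\<Sum>j<r. (-1)^(r - Suc j) * real (r choose Suc j) * G (Suc j))"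
      by (subst sum.lessThan_Suc_shift) simp
    finally show ?thesis by simp
  qed
  finally show ?thesis .
qed

lemma fdiff_sum:
  assumes "finite I"
  shows "fdiff r t (\<lambda>y. \<Sum>i\<in>I. H i y) x = (\<Sum>i\<in>I. fdiff r t (H i) x)"
  unfolding fdiff_def by (simp add: sum_distrib_left sum.swap[of _ I])

lemma fdiff_diff:
  shows "fdiff r t (\<lambda>y. G y - H y) x = fdiff r t G x - fdiff r t H x"
  unfolding fdiff_def by (simp add: algebra_simps sum_subtractf)

lemma fdiff_shift:
  shows "fdiff r t (\<lambda>y. H (y + c)) x = fdiff r t H (x + c)"
  unfolding fdiff_def by (simp add: algebra_simps)

lemma fdiff_Suc':
  "fdiff (Suc r) t g x = fdiff r t (\<lambda>y. g (y + t) - g y) x"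
  by (simp add: fdiff_Suc fdiff_diff fdiff_shift)

lemma fdiff_zero:
  assumes "r \<ge> 1" shows "fdiff r 0 g x = 0"
  using alt_sum_0[OF assms] unfolding fdiff_def by (simp add: sum_distrib_right[symmetric])

lemma fdiff_measurable[measurable]:
  assumes [measurable]: "g \<in> borel_measurable borel"
  shows "fdiff r t g \<in> borel_measurable borel"
  unfolding fdiff_def by measurable


lemma L1_shift:
  assumes [measurable]: "G \<in> borel_measurable borel"
  shows "L1norm (\<lambda>x. G (x + c)) = L1norm G"
proof -
  have "(\<integral>\<^sup>+x. ennreal \<bar>G x\<bar> \<partial>lborel) = ennreal \<bar>1\<bar> * (\<integral>\<^sup>+x. ennreal \<bar>G (c + 1 * x)\<bar> \<partial>lborel)"
    by (rule nn_integral_real_affine) auto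
  then show ?thesis unfolding L1norm_def by (simp add: add.commute)
qed

lemma L1_sum:
  assumes "finite I" and [measurable]: "\<And>i. G i \<in> borel_measurable borel"
  shows "L1norm (\<lambda>x. \<Sum>i\<in>I. G i x) \<le> (\<Sum>i\<in>I. L1norm (G i))"
proof -
  have "L1norm (\<lambda>x. \<Sum>i\<in>I. G i x) \<le> (\<integral>\<^sup>+x. (\<Sum>i\<in>I. ennreal \<bar>G i x\<bar>) \<partial>lborel)"
    unfolding L1norm_def
  proof (intro nn_integral_mono)
    fix x
    have "\<bar>\<Sum>i\<in>I. G i x\<bar> \<le> (\<Sum>i\<in>I. \<bar>G i x\<bar>)" by (rule sum_abs)
    then have "ennreal \<bar>\<Sum>i\<in>I. G i x\<bar> \<le> ennreal (\<Sum>i\<in>I. \<bar>G i x\<bar>)" by (rule ennreal_leI)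
    also have "\<dots> = (\<Sum>i\<in>I. ennreal \<bar>G i x\<bar>)" by (rule sum_ennreal[symmetric]) simp
    finally show "ennreal \<bar>\<Sum>i\<in>I. G i x\<bar> \<le> (\<Sum>i\<in>I. ennreal \<bar>G i x\<bar>)" .
  qed
  also have "\<dots> = (\<Sum>i\<in>I. L1norm (G i))"
    unfolding L1norm_def by (rule nn_integral_sum) auto
  finally show ?thesis .
qed

lemma L1_cmult:
  assumes [measurable]: "G \<in> borel_measurable borel"
  shows "L1norm (\<lambda>x. c * G x) = ennreal \<bar>c\<bar> * L1norm G"
  unfolding L1norm_def
  by (subst nn_integral_cmult[symmetric]) (auto simp: abs_mult ennreal_mult)

lemma fdiff_0: "fdiff 0 t g x = g x"
  by (simp add: fdiff_def)

lemma L1_fdiff_mult: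
  assumes m: "m \<ge> 1" and g[measurable]: "g \<in> borel_measurable borel"
  shows "L1norm (fdiff r (real m * h) g) \<le> ennreal (real m ^ r) * L1norm (fdiff r h g)"
  using g
proof (induction r arbitrary: g)
  case 0
  then show ?case by (simp add: fdiff_0[abs_def])
next
  case (Suc r)
  note [measurable] = Suc.prems
  define Dg where "Dg y = g (y + h) - g y" for y
  have Dgm[measurable]: "Dg \<in> borel_measurable borel" unfolding Dg_def by measurable
  have tel: "g (y + real m * h) - g y = (\<Sum>i<m. Dg (y + real i * h))" for y
  proof -
    have "(\<Sum>i<m. Dg (y + real i * h)) = (\<Sum>i<m. g (y + real (Suc i) * h) - g (y + real i * h))"
      by (intro sum.cong) (auto simp: Dg_def algebra_simps)
    also have "\<dots> = g (y + real m * h) - g (y + real 0 * h)"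
      by (rule sum_lessThan_telescope)
    finally show ?thesis by simp
  qed
  have eq: "fdiff (Suc r) (real m * h) g = (\<lambda>x. \<Sum>i<m. fdiff r (real m * h) Dg (x + real i * h))"
  proof
    fix x
    have "fdiff (Suc r) (real m * h) g x = fdiff r (real m * h) (\<lambda>y. \<Sum>i<m. Dg (y + real i * h)) x"
      unfolding fdiff_Suc' tel ..
    also have "\<dots> = (\<Sum>i<m. fdiff r (real m * h) (\<lambda>y. Dg (y + real i * h)) x)"
      by (rule fdiff_sum) simp
    also have "\<dots> = (\<Sum>i<m. fdiff r (real m * h) Dg (x + real i * h))"
      by (simp add: fdiff_shift)
    finally show "fdiff (Suc r) (real m * h) g x = (\<Sum>i<m. fdiff r (real m * h) Dg (x + real i * h))" .
  qed
  have "L1norm (fdiff (Suc r) (real m * h) g) \<le> (\<Sum>i<m. L1norm (\<lambda>x. fdiff r (real m * h) Dg (x + real i * h)))"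
    unfolding eq by (rule L1_sum) auto
  also have "\<dots> = (\<Sum>i<m. L1norm (fdiff r (real m * h) Dg))"
    by (intro sum.cong refl L1_shift) simp
  also have "\<dots> = of_nat m * L1norm (fdiff r (real m * h) Dg)" by simp
  also have "\<dots> \<le> of_nat m * (ennreal (real m ^ r) * L1norm (fdiff r h Dg))"
    by (intro mult_left_mono Suc.IH Dgm) simp
  also have "fdiff r h Dg = fdiff (Suc r) h g"
    by (rule ext) (simp add: fdiff_Suc' Dg_def[abs_def])
  also have "of_nat m * (ennreal (real m ^ r) * L1norm (fdiff (Suc r) h g)) =
      ennreal (real m ^ Suc r) * L1norm (fdiff (Suc r) h g)"
    by (simp add: ennreal_of_nat_eq_real_of_nat ennreal_mult mult.assoc)
  finally show ?case .
qed


lemma L1_zero: "L1norm (\<lambda>x. 0) = 0"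
  by (simp add: L1norm_def)

lemma omega_scale:
  assumes r: "r \<ge> 1" and xi: "xi > 0" and g[measurable]: "g \<in> borel_measurable borel"
  shows "L1norm (fdiff r s g) \<le> ennreal ((1 + \<bar>s\<bar>/xi)^r) * omega1 r g xi"
proof (cases "s = 0")
  case True
  then have "fdiff r s g = (\<lambda>x. 0)" using fdiff_zero[OF r] by auto
  then show ?thesis by (simp add: L1_zero)
next
  case False
  define m where "m = nat \<lceil>\<bar>s\<bar>/xi\<rceil>"
  have sx: "\<bar>s\<bar>/xi > 0" using False xi by simp
  have c: "0 < \<lceil>\<bar>s\<bar>/xi\<rceil>" using sx by (meson ceiling_le_zero not_le)
  have m1: "m \<ge> 1" using c by (simp add: m_def Suc_le_eq)
  have mge: "real m \<ge> \<bar>s\<bar>/xi" using sx unfolding m_def by linarith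
  have mle: "real m \<le> 1 + \<bar>s\<bar>/xi" using sx unfolding m_def by linarith
  define h where "h = s / real m"
  have mh: "real m * h = s" using m1 by (simp add: h_def)
  have hx: "\<bar>h\<bar> \<le> xi"
  proof -
    have "\<bar>s\<bar> \<le> real m * xi" using mge xi by (simp add: field_simps)
    then show ?thesis using m1 by (simp add: h_def abs_div field_simps)
  qed
  have "L1norm (fdiff r s g) \<le> ennreal (real m ^ r) * L1norm (fdiff r h g)"
    using L1_fdiff_mult[OF m1 g, of r h] mh by simp
  also have "\<dots> \<le> ennreal ((1 + \<bar>s\<bar>/xi)^r) * omega1 r g xi"
  proof (intro mult_mono)
    show "ennreal (real m ^ r) \<le> ennreal ((1 + \<bar>s\<bar>/xi)^r)"
      by (intro ennreal_leI power_mono mle) simp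
    show "L1norm (fdiff r h g) \<le> omega1 r g xi"
      unfolding omega1_def by (rule SUP_upper) (use hx in auto)
  qed auto
  finally show ?thesis .
qed

lemma L1_fdiff_bound:
  assumes g[measurable]: "g \<in> borel_measurable borel"
  shows "L1norm (fdiff r t g) \<le> ennreal (2^r) * L1norm g"
proof -
  have "fdiff r t g = (\<lambda>x. \<Sum>j\<in>{0..r}. (-1)^(r-j) * real (r choose j) * g (x + real j * t))"
    by (simp add: fdiff_def[abs_def])
  then have "L1norm (fdiff r t g) \<le> (\<Sum>j\<in>{0..r}. L1norm (\<lambda>x. (-1)^(r-j) * real (r choose j) * g (x + real j * t)))"
    by (simp only:) (rule L1_sum, auto)
  also have "\<dots> = (\<Sum>j\<in>{0..r}. ennreal (real (r choose j)) * L1norm g)"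
  proof (intro sum.cong refl)
    fix j
    have "L1norm (\<lambda>x. (-1)^(r-j) * real (r choose j) * g (x + real j * t)) =
        ennreal \<bar>(-1)^(r-j) * real (r choose j)\<bar> * L1norm (\<lambda>x. g (x + real j * t))"
      by (rule L1_cmult) simp
    also have "L1norm (\<lambda>x. g (x + real j * t)) = L1norm g" by (rule L1_shift) simp
    finally show "L1norm (\<lambda>x. (-1)^(r-j) * real (r choose j) * g (x + real j * t)) =
        ennreal (real (r choose j)) * L1norm g" by (simp add: abs_mult)
  qed
  also have "\<dots> = ennreal (\<Sum>j\<in>{0..r}. real (r choose j)) * L1norm g"
  proof -
    have "ennreal (\<Sum>j=0..r. real (r choose j)) = (\<Sum>j=0..r. ennreal (real (r choose j)))"
      by (rule sum_ennreal[symmetric]) simp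
    then show ?thesis by (simp only: sum_distrib_right)
  qed
  also have "(\<Sum>j\<in>{0..r}. real (r choose j)) = 2^r"
    using choose_row_sum[of r] by (simp add: atLeast0AtMost flip: of_nat_sum)
  finally show ?thesis .
qed

lemma omega_bound:
  assumes g[measurable]: "g \<in> borel_measurable borel"
  shows "omega1 r g xi \<le> ennreal (2^r) * L1norm g"
  unfolding omega1_def by (rule SUP_least) (rule L1_fdiff_bound[OF g])

lemma poly_bound_int:
  fixes s :: real and r :: nat
  assumes s: "s > 0"
  shows "(\<integral>\<^sup>+u. ennreal (indicator {0..1} u * (1 + u * s)^r) \<partial>lborel) =
         ennreal (\<Sum>k=1..r+1. real ((r+1) choose k) * s^(k-1) / real (r+1))"
proof -
  define F where "F = (\<lambda>u::real. (1 + u * s)^(r+1) / (real (r+1) * s))"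
  have "((\<lambda>u. (1 + u * s)^r) has_integral (F 1 - F 0)) {0..1}"
  proof (intro fundamental_theorem_of_calculus)
    fix u :: real
    have d1: "((\<lambda>u. (1 + u * s)^(Suc r)) has_real_derivative (real (Suc r) * (1 + u * s)^r * s)) (at u)"
    proof -
      have "((\<lambda>u. 1 + u * s) has_real_derivative s) (at u)" by (auto intro!: derivative_eq_intros)
      from DERIV_power[OF this, of "Suc r"] show ?thesis by (simp only: diff_Suc_Suc diff_zero mult_ac)
    qed
    have "(F has_real_derivative (real (Suc r) * (1 + u * s)^r * s) / (real (r+1) * s)) (at u)"
      unfolding F_def using DERIV_cdivide[OF d1, of "real (r+1) * s"] by simp
    then show "(F has_vector_derivative (1 + u * s)^r) (at u within {0..1})"
      using s by (simp add: has_real_derivative_iff_has_vector_derivative[symmetric] has_field_derivative_at_within)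
  qed simp
  moreover have "F 1 - F 0 = (\<Sum>k=1..r+1. real ((r+1) choose k) * s^(k-1) / real (r+1))"
  proof -
    have "(1 + s)^(r+1) = (\<Sum>k\<le>r+1. real ((r+1) choose k) * s^k)"
      using binomial_ring[of s 1 "r+1"] by (simp add: add.commute)
    also have "\<dots> = 1 + (\<Sum>k=1..r+1. real ((r+1) choose k) * s^k)"
      by (simp add: atMost_atLeast0 sum.atLeast_Suc_atMost)
    finally have b: "(1 + s)^(r+1) - 1 = (\<Sum>k=1..r+1. real ((r+1) choose k) * s^k)" by simp
    have "F 1 - F 0 = ((1 + s)^(r+1) - 1) / (real (r+1) * s)" by (simp add: F_def diff_divide_distrib)
    also have "\<dots> = (\<Sum>k=1..r+1. real ((r+1) choose k) * s^k / (real (r+1) * s))"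
      unfolding b by (rule sum_divide_distrib)
    also have "\<dots> = (\<Sum>k=1..r+1. real ((r+1) choose k) * s^(k-1) / real (r+1))"
    proof (intro sum.cong refl)
      fix k assume "k \<in> {1..r+1}"
      then have "s^k = s * s^(k-1)" by (cases k) auto
      then show "real ((r+1) choose k) * s^k / (real (r+1) * s) = real ((r+1) choose k) * s^(k-1) / real (r+1)"
      proof -
        have gen: "a * (s * X) / (b * s) = a * X / b" for a X b :: real using s by simp
        show ?thesis unfolding \<open>s^k = s * s^(k-1)\<close> by (rule gen)
      qed
    qed
    finally show ?thesis .
  qed
  ultimately have I: "((\<lambda>u. (1 + u * s)^r) has_integral (\<Sum>k=1..r+1. real ((r+1) choose k) * s^(k-1) / real (r+1))) {0..1}"
    by simp
  show ?thesis
    by (rule nn_integral_has_integral_lebesgue[OF _ I]) (use s in auto)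
qed


lemma cont_comp_UNIV:
  assumes "continuous_on UNIV g" "continuous_on S h"
  shows "continuous_on S (\<lambda>u. g (h u))"
  using continuous_on_compose2[OF assms(1) assms(2)] by auto

lemma fdiff_cont_u:
  assumes gc: "continuous_on UNIV g"
  shows "continuous_on S (\<lambda>u. fdiff r (u * t) g x)"
  unfolding fdiff_def by (intro continuous_intros cont_comp_UNIV[OF gc])

lemma Erem_pointwise:
  fixes f :: "real \<Rightarrow> real" and r n :: nat
  assumes r: "r \<ge> 1" and n: "n \<ge> 1"
    and D: "\<And>k x. k < n \<Longrightarrow> ((deriv ^^ k) f has_real_derivative (deriv ^^ Suc k) f x) (at x)"
    and gc: "continuous_on UNIV ((deriv ^^ n) f)"
  shows "ennreal \<bar>Erem r n f x t\<bar> \<le> ennreal (\<bar>t\<bar>^n / fact (n-1)) *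
           (\<integral>\<^sup>+u. ennreal (indicator {0..1} u * \<bar>fdiff r (u * t) ((deriv ^^ n) f) x\<bar>) \<partial>lborel)"
proof -
  define g where "g = (deriv ^^ n) f"
  define phi where "phi u = (1-u)^(n-1) * fdiff r (u * t) g x" for u
  define psi where "psi u = \<bar>fdiff r (u * t) g x\<bar>" for u
  define c where "c = t^n / fact (n-1)"
  have gc': "continuous_on UNIV g" using gc by (simp add: g_def)
  have phii: "phi integrable_on {0..1}"
    unfolding phi_def by (intro integrable_continuous_interval continuous_intros fdiff_cont_u gc')
  have psii: "psi integrable_on {0..1}"
    unfolding psi_def by (intro integrable_continuous_interval continuous_intros fdiff_cont_u gc')
  have "((\<lambda>u. c * phi u) has_integral Erem r n f x t) {0..1}"
    using E_formula[OF r n D, of t x] by (simp add: c_def phi_def g_def)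
  moreover have "((\<lambda>u. c * phi u) has_integral c * integral {0..1} phi) {0..1}"
    by (intro has_integral_mult_right integrable_integral phii)
  ultimately have E: "Erem r n f x t = c * integral {0..1} phi" by (rule has_integral_unique)
  have "\<bar>integral {0..1} phi\<bar> \<le> integral {0..1} psi"
  proof -
    have "norm (integral {0..1} phi) \<le> integral {0..1} psi"
    proof (rule integral_norm_bound_integral[OF phii psii])
      fix u :: real assume "u \<in> {0..1}"
      then have "(1-u)^(n-1) \<le> 1" "0 \<le> (1-u)^(n-1)" by (auto intro: power_le_one)
      then show "norm (phi u) \<le> psi u"
        unfolding phi_def psi_def by (simp add: abs_mult mult_left_le_one_le)
    qed
    then show ?thesis by simp
  qed
  then have "\<bar>Erem r n f x t\<bar> \<le> \<bar>c\<bar> * integral {0..1} psi"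
    unfolding E abs_mult by (intro mult_left_mono) auto
  then have "ennreal \<bar>Erem r n f x t\<bar> \<le> ennreal (\<bar>c\<bar> * integral {0..1} psi)"
    by (rule ennreal_leI)
  also have "\<dots> = ennreal \<bar>c\<bar> * ennreal (integral {0..1} psi)"
    by (rule ennreal_mult) (simp_all add: integral_nonneg[OF psii] psi_def)
  also have "ennreal (integral {0..1} psi) = (\<integral>\<^sup>+u. ennreal (indicator {0..1} u * psi u) \<partial>lborel)"
    by (rule nn_integral_has_integral_lebesgue[symmetric, OF _ integrable_integral[OF psii]]) (simp add: psi_def)
  finally show ?thesis
    by (simp add: c_def psi_def g_def abs_divide power_abs)
qed

lemma Erem_zero:
  assumes "n \<ge> 1" shows "Erem r n f x 0 = 0"
proof -
  have "(\<Sum>j=0..r. alpha_coef r n j) = 1"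
    by (simp add: sum.atLeast_Suc_atMost alpha_0)
  then have "(\<Sum>j=0..r. alpha_coef r n j * f x) = f x"
    by (simp add: sum_distrib_right[symmetric])
  moreover have "(\<Sum>k=1..n. (deriv ^^ k) f x * 0^k * delta_coef r n k / fact k) = (0::real)"
    by (intro sum.neutral) auto
  ultimately show ?thesis by (simp add: Erem_def)
qed

lemma Erem_L1:
  fixes f :: "real \<Rightarrow> real" and r n :: nat
  assumes r: "r \<ge> 1" and n: "n \<ge> 1"
    and D: "\<And>k x. k < n \<Longrightarrow> ((deriv ^^ k) f has_real_derivative (deriv ^^ Suc k) f x) (at x)"
    and gc: "continuous_on UNIV ((deriv ^^ n) f)" and xi: "xi > 0"
  shows "(\<integral>\<^sup>+x. ennreal \<bar>Erem r n f x t\<bar> \<partial>lborel) \<le> ennreal (\<bar>t\<bar>^n / fact (n-1)) *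
     omega1 r ((deriv ^^ n) f) xi * ennreal (\<Sum>k=1..r+1. real ((r+1) choose k) * (\<bar>t\<bar>/xi)^(k-1) / real (r+1))"
proof (cases "t = 0")
  case True
  then show ?thesis using Erem_zero[OF n] by simp
next
  case False
  define g where "g = (deriv ^^ n) f"
  have gm[measurable]: "g \<in> borel_measurable borel"
    using gc by (simp add: g_def borel_measurable_continuous_onI)
  define C where "C = ennreal (\<bar>t\<bar>^n / fact (n-1))"
  define h where "h x u = ennreal (indicator {0..1} u * \<bar>fdiff r (u * t) g x\<bar>)" for x u
  have hm[measurable]: "case_prod h \<in> borel_measurable (lborel \<Otimes>\<^sub>M lborel)"
    unfolding h_def fdiff_def by measurable
  have "(\<integral>\<^sup>+x. ennreal \<bar>Erem r n f x t\<bar> \<partial>lborel) \<le> (\<integral>\<^sup>+x. C * (\<integral>\<^sup>+u. h x u \<partial>lborel) \<partial>lborel)"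
    by (intro nn_integral_mono) (unfold C_def h_def g_def, rule Erem_pointwise[OF r n D gc])
  also have "\<dots> = C * (\<integral>\<^sup>+x. (\<integral>\<^sup>+u. h x u \<partial>lborel) \<partial>lborel)"
    by (rule nn_integral_cmult) measurable
  also have "(\<integral>\<^sup>+x. (\<integral>\<^sup>+u. h x u \<partial>lborel) \<partial>lborel) = (\<integral>\<^sup>+u. (\<integral>\<^sup>+x. h x u \<partial>lborel) \<partial>lborel)"
    by (rule lborel_pair.Fubini'[symmetric]) (rule hm)
  finally have L: "(\<integral>\<^sup>+x. ennreal \<bar>Erem r n f x t\<bar> \<partial>lborel) \<le> C * (\<integral>\<^sup>+u. (\<integral>\<^sup>+x. h x u \<partial>lborel) \<partial>lborel)" .
  have "(\<integral>\<^sup>+u. (\<integral>\<^sup>+x. h x u \<partial>lborel) \<partial>lborel) \<le> (\<integral>\<^sup>+u. ennreal (indicator {0..1} u * (1 + u * (\<bar>t\<bar>/xi))^r) * omega1 r g xi \<partial>lborel)"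
  proof (intro nn_integral_mono)
    fix u :: real
    have "(\<integral>\<^sup>+x. h x u \<partial>lborel) = (\<integral>\<^sup>+x. ennreal (indicator {0..1} u) * ennreal \<bar>fdiff r (u * t) g x\<bar> \<partial>lborel)"
      unfolding h_def by (intro nn_integral_cong) (simp add: ennreal_mult)
    also have "\<dots> = ennreal (indicator {0..1} u) * L1norm (fdiff r (u * t) g)"
      unfolding L1norm_def by (rule nn_integral_cmult) measurable
    also have "\<dots> \<le> ennreal (indicator {0..1} u) * (ennreal ((1 + \<bar>u * t\<bar>/xi)^r) * omega1 r g xi)"
      by (intro mult_left_mono omega_scale[OF r xi gm]) simp
    also have "\<dots> = ennreal (indicator {0..1} u * (1 + u * (\<bar>t\<bar>/xi))^r) * omega1 r g xi"
    proof (cases "u \<in> {0..1}")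
      case True
      then have "\<bar>u * t\<bar>/xi = u * (\<bar>t\<bar>/xi)" by (simp add: abs_mult)
      then show ?thesis using True xi by (simp add: mult.assoc)
    next
      case False then show ?thesis by simp
    qed
    finally show "(\<integral>\<^sup>+x. h x u \<partial>lborel) \<le> ennreal (indicator {0..1} u * (1 + u * (\<bar>t\<bar>/xi))^r) * omega1 r g xi" .
  qed
  also have "\<dots> = (\<integral>\<^sup>+u. ennreal (indicator {0..1} u * (1 + u * (\<bar>t\<bar>/xi))^r) \<partial>lborel) * omega1 r g xi"
    by (rule nn_integral_multc) measurable
  also have "(\<integral>\<^sup>+u. ennreal (indicator {0..1} u * (1 + u * (\<bar>t\<bar>/xi))^r) \<partial>lborel) =
      ennreal (\<Sum>k=1..r+1. real ((r+1) choose k) * (\<bar>t\<bar>/xi)^(k-1) / real (r+1))"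
    by (rule poly_bound_int) (use False xi in simp)
  finally have R: "(\<integral>\<^sup>+u. (\<integral>\<^sup>+x. h x u \<partial>lborel) \<partial>lborel) \<le> ennreal (\<Sum>k=1..r+1. real ((r+1) choose k) * (\<bar>t\<bar>/xi)^(k-1) / real (r+1)) * omega1 r g xi" .
  have "(\<integral>\<^sup>+x. ennreal \<bar>Erem r n f x t\<bar> \<partial>lborel) \<le> C * (ennreal (\<Sum>k=1..r+1. real ((r+1) choose k) * (\<bar>t\<bar>/xi)^(k-1) / real (r+1)) * omega1 r g xi)"
    using L mult_left_mono[OF R, of C] by (meson order_trans zero_le)
  then show ?thesis by (simp only: C_def g_def ac_simps)
qed

lemma sum_even_reindex:
  fixes n :: nat and G :: "nat \<Rightarrow> real"
  shows "(\<Sum>k=1..n. if even k then G k else (0::real)) = (\<Sum>m=1..n div 2. G (2*m))"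
proof -
  have "(\<Sum>k=1..n. if even k then G k else (0::real)) = (\<Sum>k\<in>{k\<in>{1..n}. even k}. G k)"
    using sum.inter_filter[of "{1..n::nat}" G even, OF finite_atLeastAtMost] by simp
  also have "{k\<in>{1..n}. even k} = (\<lambda>m. 2*m) ` {1..n div 2}"
  proof
    show "{k\<in>{1..n}. even k} \<subseteq> (\<lambda>m. 2*m) ` {1..n div 2}"
    proof
      fix k assume "k \<in> {k\<in>{1..n}. even k}"
      then have k: "1 \<le> k" "k \<le> n" "even k" by auto
      then obtain m where "k = 2*m" by blast
      with k show "k \<in> (\<lambda>m. 2*m) ` {1..n div 2}" by auto
    qed
    show "(\<lambda>m. 2*m) ` {1..n div 2} \<subseteq> {k\<in>{1..n}. even k}" by auto
  qed
  also have "(\<Sum>k\<in>(\<lambda>m. 2*m) ` {1..n div 2}. G k) = (\<Sum>m=1..n div 2. G (2*m))"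
    by (subst sum.reindex) (auto simp: inj_on_def)
  finally show ?thesis .
qed

lemma W_pos:
  assumes al: "al \<ge> 1" and xi: "xi > 0" and be: "be > 1 / (2 * real al)"
  shows "W_const al be xi > 0"
proof -
  have "1 / (2 * real al) > 0" using al by simp
  then have "be > 0" using be by linarith
  then show ?thesis using al xi be \<open>1 / (2 * real al) > 0\<close> Gamma_real_pos[OF \<open>be > 0\<close>]
    unfolding W_const_def by (intro divide_pos_pos mult_pos_pos) auto
qed

lemma W_momc0:
  assumes al: "al \<ge> 1" and xi: "xi > 0" and be: "be > 1 / (2 * real al)"
  shows "W_const al be xi * momc al be xi 0 = 1"
proof -
  have "1 / (2 * real al) > 0" using al by simp
  then have "Gamma (1 / (2 * real al)) > 0" "Gamma (be - 1 / (2 * real al)) > 0" using be by auto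
  then have "Gamma (1 / (2 * real al)) \<noteq> 0" "Gamma (be - 1 / (2 * real al)) \<noteq> 0" by auto
  then show ?thesis using W_momc[of al xi 0 be] al xi be by simp
qed


lemma derivs_cont:
  fixes f :: "real \<Rightarrow> real"
  assumes D: "\<And>k x. k < n \<Longrightarrow> ((deriv ^^ k) f has_real_derivative (deriv ^^ Suc k) f x) (at x)"
    and gc: "continuous_on UNIV ((deriv ^^ n) f)" and k: "k \<le> n"
  shows "continuous_on UNIV ((deriv ^^ k) f)"
proof (cases "k = n")
  case True then show ?thesis using gc by simp
next
  case False
  then have "k < n" using k by simp
  then show ?thesis
    by (intro continuous_at_imp_continuous_on ballI) (rule DERIV_isCont[OF D[OF \<open>k < n\<close>]])
qed

lemma derivs_meas:
  fixes f :: "real \<Rightarrow> real"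
  assumes D: "\<And>k x. k < n \<Longrightarrow> ((deriv ^^ k) f has_real_derivative (deriv ^^ Suc k) f x) (at x)"
    and gc: "continuous_on UNIV ((deriv ^^ n) f)" and k: "k \<le> n"
  shows "(deriv ^^ k) f \<in> borel_measurable borel"
  by (rule borel_measurable_continuous_onI derivs_cont[OF D gc k])+

lemma Delta_pointwise:
  fixes f :: "real \<Rightarrow> real" and r n al :: nat and be xi x :: real
  assumes r: "r \<ge> 1" and n: "n \<ge> 1" and al: "al \<ge> 1"
    and be: "be > real (n + r + 1) / (2 * real al)"
    and D: "\<And>k x. k < n \<Longrightarrow> ((deriv ^^ k) f has_real_derivative (deriv ^^ Suc k) f x) (at x)"
    and gc: "continuous_on UNIV ((deriv ^^ n) f)" and xi: "xi > 0"
  shows "ennreal \<bar>Delta_op r n al be xi f x\<bar> \<le>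
     ennreal (W_const al be xi) * (\<integral>\<^sup>+t. ennreal (\<bar>Erem r n f x t\<bar> / ker al be xi t) \<partial>lborel)"
proof -
  define W where "W = W_const al be xi"
  define K where "K = ker al be xi"
  have Kpos: "K t > 0" for t unfolding K_def by (rule ker_pos[OF xi])
  have bek: "be > real (k+1) / (2 * real al)" if "k \<le> n + r" for k
  proof -
    have "real (k+1) / (2 * real al) \<le> real (n + r + 1) / (2 * real al)"
      using that by (intro divide_right_mono) auto
    then show ?thesis using be by linarith
  qed
  have be1: "be > 1 / (2 * real al)" using bek[of 0] by simp
  have Wpos: "W > 0" unfolding W_def by (rule W_pos[OF al xi be1])
  have fm[measurable]: "f \<in> borel_measurable borel" using derivs_meas[OF D gc, of 0] by simp
  show ?thesis
  proof (cases "(\<integral>\<^sup>+t. ennreal (\<bar>Erem r n f x t\<bar> / K t) \<partial>lborel) = \<infinity>")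
    case True
    then show ?thesis using Wpos by (simp add: K_def W_def)
  next
    case False
    have Em0: "(\<lambda>t. Erem r n f x t / K t) \<in> borel_measurable borel"
      unfolding Erem_def K_def by measurable
    then have Em[measurable]: "(\<lambda>t. Erem r n f x t / K t) \<in> borel_measurable lborel" by simp
    have intE: "integrable lborel (\<lambda>t. Erem r n f x t / K t)"
    proof (rule integrableI_bounded[OF Em])
      have "(\<integral>\<^sup>+t. ennreal (norm (Erem r n f x t / K t)) \<partial>lborel) = (\<integral>\<^sup>+t. ennreal (\<bar>Erem r n f x t\<bar> / K t) \<partial>lborel)"
        using Kpos by (intro nn_integral_cong) (simp add: abs_of_pos)
      then show "(\<integral>\<^sup>+t. ennreal (norm (Erem r n f x t / K t)) \<partial>lborel) < \<infinity>"
        using False by (simp add: top.not_eq_extremum)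
    qed
    define c where "c k = (deriv ^^ k) f x * delta_coef r n k / fact k" for k
    have intk: "integrable lborel (\<lambda>t. t^k / K t)" if "k \<le> n" for k
      unfolding K_def by (rule moment_int(1)[OF al xi bek]) (use that in simp)
    have split: "(\<Sum>j=0..r. alpha_coef r n j * f (x + real j * t)) / K t =
        Erem r n f x t / K t + f x * (t^0 / K t) + (\<Sum>k=1..n. c k * (t^k / K t))" for t
    proof -
      have "(\<Sum>j=0..r. alpha_coef r n j * f (x + real j * t)) = Erem r n f x t + f x +
          (\<Sum>k=1..n. (deriv ^^ k) f x * t^k * delta_coef r n k / fact k)"
        by (simp add: Erem_def)
      moreover have "(\<Sum>k=1..n. (deriv ^^ k) f x * t^k * delta_coef r n k / fact k) / K t = (\<Sum>k=1..n. c k * (t^k / K t))"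
        by (simp add: sum_divide_distrib c_def mult_ac)
      ultimately show ?thesis by (simp add: add_divide_distrib)
    qed
    have LI: "(LINT t|lborel. (\<Sum>j=0..r. alpha_coef r n j * f (x + real j * t)) / K t) =
        (LINT t|lborel. Erem r n f x t / K t) + f x * (LINT t|lborel. t^0 / K t) + (\<Sum>k=1..n. c k * (LINT t|lborel. t^k / K t))"
    proof -
      have "(LINT t|lborel. (\<Sum>j=0..r. alpha_coef r n j * f (x + real j * t)) / K t) =
            (LINT t|lborel. Erem r n f x t / K t + f x * (t^0 / K t) + (\<Sum>k=1..n. c k * (t^k / K t)))"
        by (simp only: split)
      also have "\<dots> = (LINT t|lborel. Erem r n f x t / K t + f x * (t^0 / K t)) + (LINT t|lborel. (\<Sum>k=1..n. c k * (t^k / K t)))"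
      proof -
        have intS: "integrable lborel (\<lambda>t. \<Sum>k=1..n. c k * (t^k / K t))"
          by (intro Bochner_Integration.integrable_sum integrable_mult_right intk) auto
        have intE2: "integrable lborel (\<lambda>t. Erem r n f x t / K t + f x * (t^0 / K t))"
          by (intro Bochner_Integration.integrable_add integrable_mult_right intE intk) simp
        show ?thesis by (rule Bochner_Integration.integral_add[OF intE2 intS])
      qed
      also have "(LINT t|lborel. Erem r n f x t / K t + f x * (t^0 / K t)) = (LINT t|lborel. Erem r n f x t / K t) + f x * (LINT t|lborel. t^0 / K t)"
      proof -
        have i0: "integrable lborel (\<lambda>t. f x * (t^0 / K t))"
          by (intro integrable_mult_right intk) simp
        have "(LINT t|lborel. Erem r n f x t / K t + f x * (t^0 / K t)) = (LINT t|lborel. Erem r n f x t / K t) + (LINT t|lborel. f x * (t^0 / K t))"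
          by (rule Bochner_Integration.integral_add[OF intE i0])
        also have "(LINT t|lborel. f x * (t^0 / K t)) = f x * (LINT t|lborel. t^0 / K t)"
          by (rule integral_mult_right_zero)
        finally show ?thesis .
      qed
      also have "(LINT t|lborel. (\<Sum>k=1..n. c k * (t^k / K t))) = (\<Sum>k=1..n. c k * (LINT t|lborel. t^k / K t))"
      proof -
        have "(LINT t|lborel. (\<Sum>k=1..n. c k * (t^k / K t))) = (\<Sum>k=1..n. (LINT t|lborel. c k * (t^k / K t)))"
          by (intro Bochner_Integration.integral_sum integrable_mult_right intk) auto
        also have "\<dots> = (\<Sum>k=1..n. c k * (LINT t|lborel. t^k / K t))"
          by (intro sum.cong refl integral_mult_right_zero)
        finally show ?thesis .
      qed
      finally show ?thesis .
    qed
    have mom: "W * (LINT t|lborel. t^k / K t) = (if even k then xi^k *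
       (Gamma (real (k+1) / (2 * real al)) * Gamma (be - real (k+1) / (2 * real al))
        / (Gamma (1 / (2 * real al)) * Gamma (be - 1 / (2 * real al)))) else 0)" if "k \<le> n" for k
      using moment_int(2)[OF al xi bek, of k] W_momc[OF al xi bek, of k] that
      by (simp add: K_def W_def)
    have mom0: "W * (LINT t|lborel. t^0 / K t) = 1"
      using moment_int(2)[OF al xi bek, of 0] W_momc0[OF al xi be1] by (simp add: K_def W_def)
    have "M_op r n al be xi f x = W * (LINT t|lborel. Erem r n f x t / K t) + f x * (W * (LINT t|lborel. t^0 / K t)) +
        (\<Sum>k=1..n. c k * (W * (LINT t|lborel. t^k / K t)))"
    proof -
      have "M_op r n al be xi f x = W * (LINT t|lborel. (\<Sum>j=0..r. alpha_coef r n j * f (x + real j * t)) / K t)"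
        by (simp add: M_op_def W_def K_def ker_def)
      then show ?thesis unfolding LI by (simp add: algebra_simps sum_distrib_left)
    qed
    also have "(\<Sum>k=1..n. c k * (W * (LINT t|lborel. t^k / K t))) =
       (\<Sum>k=1..n. if even k then c k * (xi^k *
       (Gamma (real (k+1) / (2 * real al)) * Gamma (be - real (k+1) / (2 * real al))
        / (Gamma (1 / (2 * real al)) * Gamma (be - 1 / (2 * real al))))) else 0)"
      by (intro sum.cong refl) (simp add: mom)
    also have "\<dots> = (\<Sum>m=1..n div 2. (deriv ^^ (2*m)) f x * delta_coef r n (2*m) / fact (2*m)
          * (Gamma (real (2*m+1) / (2 * real al)) * Gamma (be - real (2*m+1) / (2 * real al))
             / (Gamma (1 / (2 * real al)) * Gamma (be - 1 / (2 * real al))))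
          * xi ^ (2*m))"
      by (subst sum_even_reindex) (simp add: c_def mult_ac)
    finally have "Delta_op r n al be xi f x = W * (LINT t|lborel. Erem r n f x t / K t)"
      unfolding Delta_op_def mom0 by simp
    then have "ennreal \<bar>Delta_op r n al be xi f x\<bar> = ennreal W * ennreal (norm (LINT t|lborel. Erem r n f x t / K t))"
      using Wpos by (simp add: abs_mult ennreal_mult)
    also have "\<dots> \<le> ennreal W * (\<integral>\<^sup>+t. ennreal (norm (Erem r n f x t / K t)) \<partial>lborel)"
      by (intro mult_left_mono integral_norm_bound_ennreal intE) simp
    also have "(\<integral>\<^sup>+t. ennreal (norm (Erem r n f x t / K t)) \<partial>lborel) = (\<integral>\<^sup>+t. ennreal (\<bar>Erem r n f x t\<bar> / K t) \<partial>lborel)"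
      using Kpos by (intro nn_integral_cong) (simp add: abs_of_pos)
    finally show ?thesis by (simp add: W_def K_def)
  qed
qed

lemma Erem_pair_meas:
  fixes f :: "real \<Rightarrow> real"
  assumes D: "\<And>k x. k < n \<Longrightarrow> ((deriv ^^ k) f has_real_derivative (deriv ^^ Suc k) f x) (at x)"
    and gc: "continuous_on UNIV ((deriv ^^ n) f)"
  shows "(\<lambda>p. Erem r n f (fst p) (snd p)) \<in> borel_measurable (lborel \<Otimes>\<^sub>M lborel)"
proof -
  define F where "F k x = (if k \<le> n then (deriv ^^ k) f x else 0)" for k x
  have Fm[measurable]: "F k \<in> borel_measurable borel" for k
  proof (cases "k \<le> n")
    case True
    then have "F k = (deriv ^^ k) f" by (simp add: F_def[abs_def])
    then show ?thesis using derivs_meas[OF D gc True] by simp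
  next
    case False
    then have "F k = (\<lambda>x. 0)" by (simp add: F_def[abs_def])
    then show ?thesis by simp
  qed
  have fm[measurable]: "f \<in> borel_measurable borel" using derivs_meas[OF D gc, of 0] by simp
  have eq: "Erem r n f x t = (\<Sum>j=0..r. alpha_coef r n j * f (x + real j * t)) - f x
     - (\<Sum>k=1..n. F k x * t^k * delta_coef r n k / fact k)" for x t
    unfolding Erem_def by (simp add: F_def)
  show ?thesis unfolding eq by measurable
qed


lemma ennreal_3:
  assumes "A \<ge> 0" "B \<ge> 0" "P \<ge> 0"
  shows "ennreal A * (ennreal B * om * ennreal P) = om * ennreal (A * B * P)"
proof -
  have "ennreal (A * B * P) = ennreal A * ennreal B * ennreal P"
    using assms by (simp add: ennreal_mult)
  then show ?thesis by (simp add: mult_ac)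
qed

lemma main_bound:
  fixes f :: "real \<Rightarrow> real" and r n al :: nat and be xi :: real
  assumes r: "r \<ge> 1" and n: "n \<ge> 1" and al: "al \<ge> 1"
    and be: "be > real (n + r + 1) / (2 * real al)"
    and D: "\<And>k x. k < n \<Longrightarrow> ((deriv ^^ k) f has_real_derivative (deriv ^^ Suc k) f x) (at x)"
    and gc: "continuous_on UNIV ((deriv ^^ n) f)" and xi: "xi > 0"
  shows "(\<integral>\<^sup>+x. ennreal (W_const al be xi) * (\<integral>\<^sup>+t. ennreal (\<bar>Erem r n f x t\<bar> / ker al be xi t) \<partial>lborel) \<partial>lborel)
     \<le> ennreal (bound_const r n al be) * omega1 r ((deriv ^^ n) f) xi * ennreal (xi ^ n)"
proof -
  define W where "W = W_const al be xi"
  define K where "K = ker al be xi"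
  define om where "om = omega1 r ((deriv ^^ n) f) xi"
  define a where "a k = real ((r+1) choose k) / (fact (n-1) * real (r+1) * xi^(k-1))" for k
  define S where "S = (\<Sum>k=1..r+1. a k * momc al be xi (n+k-1))"
  have Kpos: "K t > 0" for t unfolding K_def by (rule ker_pos[OF xi])
  have bek: "be > real (k+1) / (2 * real al)" if "k \<le> n + r" for k
  proof -
    have "real (k+1) / (2 * real al) \<le> real (n + r + 1) / (2 * real al)"
      using that by (intro divide_right_mono) auto
    then show ?thesis using be by linarith
  qed
  have Em[measurable]: "(\<lambda>p. Erem r n f (fst p) (snd p)) \<in> borel_measurable (lborel \<Otimes>\<^sub>M lborel)"
    by (rule Erem_pair_meas[OF D gc])
  have Km[measurable]: "K \<in> borel_measurable borel" unfolding K_def by measurable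
  have hm[measurable]: "case_prod (\<lambda>x t. ennreal (\<bar>Erem r n f x t\<bar> / K t)) \<in> borel_measurable (lborel \<Otimes>\<^sub>M lborel)"
    by measurable
  have "(\<integral>\<^sup>+x. ennreal W * (\<integral>\<^sup>+t. ennreal (\<bar>Erem r n f x t\<bar> / K t) \<partial>lborel) \<partial>lborel)
      = ennreal W * (\<integral>\<^sup>+x. (\<integral>\<^sup>+t. ennreal (\<bar>Erem r n f x t\<bar> / K t) \<partial>lborel) \<partial>lborel)"
    by (rule nn_integral_cmult) measurable
  also have "(\<integral>\<^sup>+x. (\<integral>\<^sup>+t. ennreal (\<bar>Erem r n f x t\<bar> / K t) \<partial>lborel) \<partial>lborel)
      = (\<integral>\<^sup>+t. (\<integral>\<^sup>+x. ennreal (\<bar>Erem r n f x t\<bar> / K t) \<partial>lborel) \<partial>lborel)"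
    by (rule lborel_pair.Fubini'[symmetric]) (rule hm)
  also have "\<dots> \<le> (\<integral>\<^sup>+t. om * ennreal (\<Sum>k=1..r+1. a k * (\<bar>t\<bar>^(n+k-1) / K t)) \<partial>lborel)"
  proof (intro nn_integral_mono)
    fix t :: real
    have "(\<integral>\<^sup>+x. ennreal (\<bar>Erem r n f x t\<bar> / K t) \<partial>lborel) = (\<integral>\<^sup>+x. ennreal (1 / K t) * ennreal \<bar>Erem r n f x t\<bar> \<partial>lborel)"
      using Kpos[of t] by (intro nn_integral_cong) (simp add: ennreal_mult[symmetric])
    also have "\<dots> = ennreal (1 / K t) * (\<integral>\<^sup>+x. ennreal \<bar>Erem r n f x t\<bar> \<partial>lborel)"
    proof (rule nn_integral_cmult)
      have "(\<lambda>x. (x, t)) \<in> lborel \<rightarrow>\<^sub>M lborel \<Otimes>\<^sub>M lborel" by (rule measurable_Pair2') simp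
      from measurable_comp[OF this Em] have "(\<lambda>x. Erem r n f x t) \<in> borel_measurable lborel"
        by (simp add: o_def)
      then show "(\<lambda>x. ennreal \<bar>Erem r n f x t\<bar>) \<in> borel_measurable lborel" by measurable
    qed
    also have "\<dots> \<le> ennreal (1 / K t) * (ennreal (\<bar>t\<bar>^n / fact (n-1)) * om *
        ennreal (\<Sum>k=1..r+1. real ((r+1) choose k) * (\<bar>t\<bar>/xi)^(k-1) / real (r+1)))"
      unfolding om_def by (rule mult_left_mono[OF Erem_L1[OF r n D gc xi] zero_le])
    also have "\<dots> = om * ennreal (1 / K t * (\<bar>t\<bar>^n / fact (n-1)) *
        (\<Sum>k=1..r+1. real ((r+1) choose k) * (\<bar>t\<bar>/xi)^(k-1) / real (r+1)))"
    proof -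
      have Pnn: "0 \<le> (\<Sum>k=1..r+1. real ((r+1) choose k) * (\<bar>t\<bar>/xi)^(k-1) / real (r+1))"
        by (intro sum_nonneg) (use xi in auto)
      show ?thesis by (rule ennreal_3[OF _ _ Pnn]) (use Kpos[of t] in auto)
    qed
    also have "1 / K t * (\<bar>t\<bar>^n / fact (n-1)) * (\<Sum>k=1..r+1. real ((r+1) choose k) * (\<bar>t\<bar>/xi)^(k-1) / real (r+1))
        = (\<Sum>k=1..r+1. a k * (\<bar>t\<bar>^(n+k-1) / K t))"
    proof -
      have "1 / K t * (\<bar>t\<bar>^n / fact (n-1)) * (\<Sum>k=1..r+1. real ((r+1) choose k) * (\<bar>t\<bar>/xi)^(k-1) / real (r+1))
          = (\<Sum>k=1..r+1. 1 / K t * (\<bar>t\<bar>^n / fact (n-1)) * (real ((r+1) choose k) * (\<bar>t\<bar>/xi)^(k-1) / real (r+1)))"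
        by (rule sum_distrib_left)
      also have "\<dots> = (\<Sum>k=1..r+1. a k * (\<bar>t\<bar>^(n+k-1) / K t))"
      proof (intro sum.cong refl)
        fix k assume k: "k \<in> {1..r+1}"
        then have "\<bar>t\<bar>^(n+k-1) = \<bar>t\<bar>^n * \<bar>t\<bar>^(k-1)"
          by (simp add: power_add[symmetric])
        then show "1 / K t * (\<bar>t\<bar>^n / fact (n-1)) * (real ((r+1) choose k) * (\<bar>t\<bar>/xi)^(k-1) / real (r+1))
            = a k * (\<bar>t\<bar>^(n+k-1) / K t)"
          using xi Kpos[of t] by (simp add: a_def power_divide field_simps)
      qed
      finally show ?thesis .
    qed
    finally show "(\<integral>\<^sup>+x. ennreal (\<bar>Erem r n f x t\<bar> / K t) \<partial>lborel) \<le> om * ennreal (\<Sum>k=1..r+1. a k * (\<bar>t\<bar>^(n+k-1) / K t))" .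
  qed
  also have "\<dots> = om * (\<integral>\<^sup>+t. ennreal (\<Sum>k=1..r+1. a k * (\<bar>t\<bar>^(n+k-1) / K t)) \<partial>lborel)"
    by (rule nn_integral_cmult) measurable
  also have "(\<integral>\<^sup>+t. ennreal (\<Sum>k=1..r+1. a k * (\<bar>t\<bar>^(n+k-1) / K t)) \<partial>lborel) = ennreal S"
  proof -
    have ann: "a k \<ge> 0" for k using xi by (simp add: a_def)
    have "(\<integral>\<^sup>+t. ennreal (\<Sum>k=1..r+1. a k * (\<bar>t\<bar>^(n+k-1) / K t)) \<partial>lborel) =
        (\<integral>\<^sup>+t. (\<Sum>k=1..r+1. ennreal (a k) * ennreal (\<bar>t\<bar>^(n+k-1) / K t)) \<partial>lborel)"
    proof (intro nn_integral_cong)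
      fix t :: real
      have hn: "0 \<le> \<bar>t\<bar>^(n+k-1) / K t" for k using Kpos[of t] by simp
      have "ennreal (\<Sum>k=1..r+1. a k * (\<bar>t\<bar>^(n+k-1) / K t)) = (\<Sum>k=1..r+1. ennreal (a k * (\<bar>t\<bar>^(n+k-1) / K t)))"
        by (rule sum_ennreal[symmetric]) (rule mult_nonneg_nonneg[OF ann hn])
      also have "\<dots> = (\<Sum>k=1..r+1. ennreal (a k) * ennreal (\<bar>t\<bar>^(n+k-1) / K t))"
        by (intro sum.cong refl ennreal_mult ann hn)
      finally show "ennreal (\<Sum>k=1..r+1. a k * (\<bar>t\<bar>^(n+k-1) / K t)) = (\<Sum>k=1..r+1. ennreal (a k) * ennreal (\<bar>t\<bar>^(n+k-1) / K t))" .
    qed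
    also have "\<dots> = (\<Sum>k=1..r+1. (\<integral>\<^sup>+t. ennreal (a k) * ennreal (\<bar>t\<bar>^(n+k-1) / K t) \<partial>lborel))"
      by (rule nn_integral_sum) measurable
    also have "\<dots> = (\<Sum>k=1..r+1. ennreal (a k) * ennreal (momc al be xi (n+k-1)))"
    proof (intro sum.cong refl)
      fix k assume k: "k \<in> {1..r+1}"
      have "(\<integral>\<^sup>+t. ennreal (a k) * ennreal (\<bar>t\<bar>^(n+k-1) / K t) \<partial>lborel) =
          ennreal (a k) * (\<integral>\<^sup>+t. ennreal (\<bar>t\<bar>^(n+k-1) / K t) \<partial>lborel)"
        by (rule nn_integral_cmult) measurable
      also have "(\<integral>\<^sup>+t. ennreal (\<bar>t\<bar>^(n+k-1) / K t) \<partial>lborel) = ennreal (momc al be xi (n+k-1))"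
        unfolding K_def by (rule moment_nn[OF al xi bek]) (use k in auto)
      finally show "(\<integral>\<^sup>+t. ennreal (a k) * ennreal (\<bar>t\<bar>^(n+k-1) / K t) \<partial>lborel) =
          ennreal (a k) * ennreal (momc al be xi (n+k-1))" .
    qed
    also have "\<dots> = ennreal S"
    proof -
      have mnn: "momc al be xi p \<ge> 0" if "p \<le> n + r" for p
      proof -
        have "real (p+1) / (2 * real al) > 0" using al by simp
        then have "Beta (real (p+1) / (2 * real al)) (be - real (p+1) / (2 * real al)) > 0"
          using bek[OF that] by (simp add: Beta_def)
        then show ?thesis using xi by (simp add: momc_def)
      qed
      have "(\<Sum>k=1..r+1. ennreal (a k) * ennreal (momc al be xi (n+k-1))) = (\<Sum>k=1..r+1. ennreal (a k * momc al be xi (n+k-1)))"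
        by (intro sum.cong refl) (rule ennreal_mult'[symmetric, OF ann])
      also have "\<dots> = ennreal S" unfolding S_def
        by (rule sum_ennreal) (use ann mnn in auto)
      finally show ?thesis .
    qed
    finally show ?thesis .
  qed
  finally have L: "(\<integral>\<^sup>+x. ennreal W * (\<integral>\<^sup>+t. ennreal (\<bar>Erem r n f x t\<bar> / K t) \<partial>lborel) \<partial>lborel) \<le> ennreal W * (om * ennreal S)"
    by (simp add: mult_left_mono)
  have WS: "W * S = bound_const r n al be * xi^n"
  proof -
    have "W * S = (\<Sum>k=1..r+1. a k * (W * momc al be xi (n+k-1)))"
      unfolding S_def sum_distrib_left by (intro sum.cong refl) (simp add: mult_ac)
    also have "\<dots> = (\<Sum>k=1..r+1. a k * (xi^(n+k-1) *
     (Gamma (real (n+k) / (2 * real al)) * Gamma (be - real (n+k) / (2 * real al))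
      / (Gamma (1 / (2 * real al)) * Gamma (be - 1 / (2 * real al))))))"
    proof (intro sum.cong refl)
      fix k assume k: "k \<in> {1..r+1}"
      have "n + k - 1 \<le> n + r" using k by auto
      from W_momc[OF al xi bek[OF this]] k show "a k * (W * momc al be xi (n+k-1)) = a k * (xi^(n+k-1) *
     (Gamma (real (n+k) / (2 * real al)) * Gamma (be - real (n+k) / (2 * real al))
      / (Gamma (1 / (2 * real al)) * Gamma (be - 1 / (2 * real al)))))"
        by (simp add: W_def)
    qed
    also have "\<dots> = bound_const r n al be * xi^n"
      unfolding bound_const_def sum_distrib_left sum_distrib_right
    proof (intro sum.cong refl)
      fix k assume k: "k \<in> {1..r+1}"
      then have "xi^(n+k-1) = xi^n * xi^(k-1)" by (simp add: power_add[symmetric])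
      then show "a k * (xi^(n+k-1) *
     (Gamma (real (n+k) / (2 * real al)) * Gamma (be - real (n+k) / (2 * real al))
      / (Gamma (1 / (2 * real al)) * Gamma (be - 1 / (2 * real al))))) =
        1 / (real (r+1) * fact (n-1) * Gamma (1 / (2 * real al)) * Gamma (be - 1 / (2 * real al))) *
        (real ((r+1) choose k) * Gamma (real (n+k) / (2 * real al)) * Gamma (be - real (n+k) / (2 * real al))) * xi^n"
      proof -
        have g1: "Gamma (1 / (2 * real al)) > 0" using al by simp
        have g2: "Gamma (be - 1 / (2 * real al)) > 0" using bek[of 0] by simp
        have xk: "xi^(k-1) > 0" using xi by simp
        define G1 where "G1 = Gamma (1 / (2 * real al))"
        define G2 where "G2 = Gamma (be - 1 / (2 * real al))"
        define H where "H = Gamma (real (n+k) / (2 * real al)) * Gamma (be - real (n+k) / (2 * real al))"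
        have gen: "A / (B * Y) * (X * Y * C) = A * C * X / B" if "Y > 0" for A B C X Y :: real
          using that by (cases "B = 0") (simp_all add: field_simps)
        have "a k * (xi^(n+k-1) * (H / (G1 * G2))) = real ((r+1) choose k) * (H / (G1 * G2)) * xi^n / (fact (n-1) * real (r+1))"
          unfolding a_def \<open>xi^(n+k-1) = xi^n * xi^(k-1)\<close> by (rule gen[OF xk])
        also have "\<dots> = 1 / (real (r+1) * fact (n-1) * G1 * G2) * (real ((r+1) choose k) * H) * xi^n"
          by (simp add: field_simps)
        finally have "a k * (xi^(n+k-1) * (H / (G1 * G2))) = 1 / (real (r+1) * fact (n-1) * G1 * G2) * (real ((r+1) choose k) * H) * xi^n" .
        then show ?thesis by (simp add: G1_def G2_def H_def mult_ac)
      qed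
    qed
    finally show ?thesis .
  qed
  have "ennreal W * (om * ennreal S) = om * ennreal (W * S)"
  proof -
    have Wp: "W > 0" unfolding W_def using W_pos[OF al xi] bek[of 0] by simp
    have "ennreal (W * S) = ennreal W * ennreal S" by (rule ennreal_mult'[OF less_imp_le[OF Wp]])
    then show ?thesis by (simp only: mult_ac)
  qed
  also have "\<dots> = ennreal (bound_const r n al be) * om * ennreal (xi ^ n)"
    unfolding WS using xi by (simp add: ennreal_mult'[symmetric] mult.commute[of "bound_const r n al be"] mult_ac)
  finally show ?thesis using L by (simp add: W_def K_def om_def)
qed

lemma L1_finite:
  assumes "integrable lborel G"
  shows "L1norm G = ennreal (LINT x|lborel. \<bar>G x\<bar>)"
  unfolding L1norm_def using assms
  by (intro nn_integral_eq_integral) (auto intro!: integrable_abs)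

lemma tendsto_squeeze_ennreal:
  fixes F :: "real \<Rightarrow> ennreal" and h :: "real \<Rightarrow> real"
  assumes "\<And>xi. xi > 0 \<Longrightarrow> F xi \<le> ennreal (h xi)" and "(h \<longlongrightarrow> 0) (at_right 0)"
  shows "(F \<longlongrightarrow> 0) (at_right 0)"
proof (rule tendsto_sandwich[of "\<lambda>_. 0" F "at_right 0" "\<lambda>xi. ennreal (h xi)"])
  show "\<forall>\<^sub>F xi in at_right 0. 0 \<le> F xi" by simp
  show "\<forall>\<^sub>F xi in at_right 0. F xi \<le> ennreal (h xi)"
    using eventually_at_right_less[of 0] by eventually_elim (rule assms(1))
  show "((\<lambda>xi. ennreal (h xi)) \<longlongrightarrow> 0) (at_right 0)"
    using tendsto_ennrealI[OF assms(2)] by simp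
qed simp

theorem theorem2:
  fixes f :: "real \<Rightarrow> real" and r n al :: nat and be :: real
  assumes "r \<ge> 1" and "n \<ge> 1" and "al \<ge> 1"
    and "be > real (n + r + 1) / (2 * real al)"
    and "\<And>k x. k < n \<Longrightarrow> ((deriv ^^ k) f has_real_derivative (deriv ^^ Suc k) f x) (at x)"
    and "continuous_on UNIV ((deriv ^^ n) f)"
    and "integrable lborel ((deriv ^^ n) f)"
  shows "(\<forall>xi>0. L1norm (Delta_op r n al be xi f)
            \<le> ennreal (bound_const r n al be) * omega1 r ((deriv ^^ n) f) xi * ennreal (xi ^ n))
       \<and> ((\<lambda>xi. L1norm (Delta_op r n al be xi f)) \<longlongrightarrow> 0) (at_right 0)
       \<and> ((\<forall>m\<in>{1..n div 2}. integrable lborel ((deriv ^^ (2*m)) f))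
            \<longrightarrow> ((\<lambda>xi. L1norm (\<lambda>x. M_op r n al be xi f x - f x)) \<longlongrightarrow> 0) (at_right 0))"
proof -
  note r = assms(1) and n = assms(2) and al = assms(3) and be = assms(4) and D = assms(5)
    and gc = assms(6) and gi = assms(7)
  define g where "g = (deriv ^^ n) f"
  have gm[measurable]: "g \<in> borel_measurable borel"
    using gc by (simp add: g_def borel_measurable_continuous_onI)
  define A where "A xi x = ennreal (W_const al be xi) * (\<integral>\<^sup>+t. ennreal (\<bar>Erem r n f x t\<bar> / ker al be xi t) \<partial>lborel)" for xi x
  have Em[measurable]: "(\<lambda>p. Erem r n f (fst p) (snd p)) \<in> borel_measurable (lborel \<Otimes>\<^sub>M lborel)"
    by (rule Erem_pair_meas[OF D gc])
  have Am[measurable]: "A xi \<in> borel_measurable lborel" for xi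
  proof -
    have Km[measurable]: "ker al be xi \<in> borel_measurable borel" by measurable
    have "case_prod (\<lambda>x t. ennreal (\<bar>Erem r n f x t\<bar> / ker al be xi t)) \<in> borel_measurable (lborel \<Otimes>\<^sub>M lborel)"
      by measurable
    then show ?thesis unfolding A_def[abs_def] by measurable
  qed
  have P1: "L1norm (Delta_op r n al be xi f) \<le> ennreal (bound_const r n al be) * omega1 r g xi * ennreal (xi ^ n)"
    if xi: "xi > 0" for xi
  proof -
    have "L1norm (Delta_op r n al be xi f) \<le> (\<integral>\<^sup>+x. A xi x \<partial>lborel)"
      unfolding L1norm_def A_def by (intro nn_integral_mono Delta_pointwise[OF r n al be D gc xi])
    also have "\<dots> \<le> ennreal (bound_const r n al be) * omega1 r g xi * ennreal (xi ^ n)"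
      unfolding A_def g_def by (rule main_bound[OF r n al be D gc xi])
    finally show ?thesis .
  qed
  define B where "B = (LINT x|lborel. \<bar>g x\<bar>)"
  have LB: "L1norm g = ennreal B" unfolding B_def by (rule L1_finite) (use gi in \<open>simp add: g_def\<close>)
  define bc where "bc = bound_const r n al be"
  have P1': "(\<integral>\<^sup>+x. A xi x \<partial>lborel) \<le> ennreal (2^r * B * xi^n * bc)" if xi: "xi > 0" for xi
  proof -
    have "(\<integral>\<^sup>+x. A xi x \<partial>lborel) \<le> ennreal bc * omega1 r g xi * ennreal (xi ^ n)"
      unfolding A_def g_def bc_def by (rule main_bound[OF r n al be D gc xi])
    also have "\<dots> \<le> ennreal bc * (ennreal (2^r) * ennreal B) * ennreal (xi ^ n)"
      using omega_bound[OF gm, of r xi] unfolding LB by (intro mult_right_mono mult_left_mono) auto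
    also have "\<dots> = ennreal (2^r * B * xi^n * bc)"
    proof -
      have B0: "B \<ge> 0" unfolding B_def by (rule integral_nonneg_AE) auto
      have "ennreal (2^r * B * xi^n * bc) = ennreal (2^r * B * xi^n) * ennreal bc"
        by (rule ennreal_mult') (use B0 xi in simp)
      also have "ennreal (2^r * B * xi^n) = ennreal (2^r) * ennreal B * ennreal (xi^n)"
        using B0 xi by (simp add: ennreal_mult)
      finally show ?thesis by (simp add: mult_ac)
    qed
    finally show ?thesis .
  qed
  have lim0: "((\<lambda>xi::real. 2^r * B * xi^n * bc) \<longlongrightarrow> 0) (at_right 0)"
  proof -
    have "((\<lambda>xi::real. 2^r * B * xi^n * bc) \<longlongrightarrow> 2^r * B * 0^n * bc) (at_right 0)"
      by (intro tendsto_intros)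
    then show ?thesis using n by (simp add: power_0_left)
  qed
  have P2: "((\<lambda>xi. L1norm (Delta_op r n al be xi f)) \<longlongrightarrow> 0) (at_right 0)"
  proof (rule tendsto_squeeze_ennreal[OF _ lim0])
    fix xi :: real assume xi: "xi > 0"
    have "L1norm (Delta_op r n al be xi f) \<le> (\<integral>\<^sup>+x. A xi x \<partial>lborel)"
      unfolding L1norm_def A_def by (intro nn_integral_mono Delta_pointwise[OF r n al be D gc xi])
    also have "\<dots> \<le> ennreal (2^r * B * xi^n * bc)" by (rule P1'[OF xi])
    finally show "L1norm (Delta_op r n al be xi f) \<le> ennreal (2^r * B * xi^n * bc)" .
  qed
  have P3: "((\<lambda>xi. L1norm (\<lambda>x. M_op r n al be xi f x - f x)) \<longlongrightarrow> 0) (at_right 0)"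
    if ints: "\<forall>m\<in>{1..n div 2}. integrable lborel ((deriv ^^ (2*m)) f)"
  proof -
    define dc where "dc m = delta_coef r n (2*m) / fact (2*m)
          * (Gamma (real (2*m+1) / (2 * real al)) * Gamma (be - real (2*m+1) / (2 * real al))
             / (Gamma (1 / (2 * real al)) * Gamma (be - 1 / (2 * real al))))" for m
    define Bm where "Bm m = (LINT x|lborel. \<bar>(deriv ^^ (2*m)) f x\<bar>)" for m
    have Fm[measurable]: "(deriv ^^ (2*m)) f \<in> borel_measurable borel" if "m \<in> {1..n div 2}" for m
      by (rule derivs_meas[OF D gc]) (use that in auto)
    have LBm: "L1norm ((deriv ^^ (2*m)) f) = ennreal (Bm m)" if "m \<in> {1..n div 2}" for m
      unfolding Bm_def by (rule L1_finite) (use ints that in auto)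
    define h where "h xi = 2^r * B * xi^n * bc + (\<Sum>m=1..n div 2. \<bar>dc m\<bar> * xi^(2*m) * Bm m)" for xi :: real
    have limh: "(h \<longlongrightarrow> 0) (at_right 0)"
    proof -
      have "(h \<longlongrightarrow> 2^r * B * 0^n * bc + (\<Sum>m=1..n div 2. \<bar>dc m\<bar> * 0^(2*m) * Bm m)) (at_right 0)"
        unfolding h_def[abs_def] by (intro tendsto_intros)
      moreover have "(\<Sum>m=1..n div 2. \<bar>dc m\<bar> * 0^(2*m) * Bm m) = (0::real)"
        by (intro sum.neutral) auto
      ultimately show ?thesis using n by (simp add: power_0_left)
    qed
    show ?thesis
    proof (rule tendsto_squeeze_ennreal[OF _ limh])
      fix xi :: real assume xi: "xi > 0"
      define T where "T m x = ennreal (\<bar>dc m\<bar> * xi^(2*m)) * ennreal \<bar>(deriv ^^ (2*m)) f x\<bar>" for m x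
      have pw: "ennreal \<bar>M_op r n al be xi f x - f x\<bar> \<le> A xi x + (\<Sum>m=1..n div 2. T m x)" for x
      proof -
        have eq: "M_op r n al be xi f x - f x = Delta_op r n al be xi f x + (\<Sum>m=1..n div 2. (deriv ^^ (2*m)) f x * dc m * xi^(2*m))"
          unfolding Delta_op_def dc_def by (simp add: mult_ac)
        have "\<bar>M_op r n al be xi f x - f x\<bar> \<le> \<bar>Delta_op r n al be xi f x\<bar> + (\<Sum>m=1..n div 2. \<bar>(deriv ^^ (2*m)) f x * dc m * xi^(2*m)\<bar>)"
          unfolding eq by (rule order_trans[OF abs_triangle_ineq]) (simp add: sum_abs)
        then have "ennreal \<bar>M_op r n al be xi f x - f x\<bar> \<le> ennreal (\<bar>Delta_op r n al be xi f x\<bar> + (\<Sum>m=1..n div 2. \<bar>(deriv ^^ (2*m)) f x * dc m * xi^(2*m)\<bar>))"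
          by (rule ennreal_leI)
        also have "\<dots> = ennreal \<bar>Delta_op r n al be xi f x\<bar> + (\<Sum>m=1..n div 2. ennreal \<bar>(deriv ^^ (2*m)) f x * dc m * xi^(2*m)\<bar>)"
          by (simp add: ennreal_plus sum_nonneg sum_ennreal)
        also have "(\<Sum>m=1..n div 2. ennreal \<bar>(deriv ^^ (2*m)) f x * dc m * xi^(2*m)\<bar>) = (\<Sum>m=1..n div 2. T m x)"
          unfolding T_def using xi by (intro sum.cong refl) (simp add: ennreal_mult[symmetric] abs_mult mult_ac)
        also have "ennreal \<bar>Delta_op r n al be xi f x\<bar> \<le> A xi x"
          unfolding A_def by (rule Delta_pointwise[OF r n al be D gc xi])
        finally show ?thesis by (simp add: add_right_mono)
      qed
      have "L1norm (\<lambda>x. M_op r n al be xi f x - f x) \<le> (\<integral>\<^sup>+x. A xi x + (\<Sum>m=1..n div 2. T m x) \<partial>lborel)"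
        unfolding L1norm_def by (rule nn_integral_mono) (rule pw)
      also have "\<dots> = (\<integral>\<^sup>+x. A xi x \<partial>lborel) + (\<Sum>m=1..n div 2. (\<integral>\<^sup>+x. T m x \<partial>lborel))"
      proof -
        have Tm: "T m \<in> borel_measurable lborel" if "m \<in> {1..n div 2}" for m
          using Fm[OF that] unfolding T_def[abs_def] by measurable
        have "(\<integral>\<^sup>+x. A xi x + (\<Sum>m=1..n div 2. T m x) \<partial>lborel) = (\<integral>\<^sup>+x. A xi x \<partial>lborel) + (\<integral>\<^sup>+x. (\<Sum>m=1..n div 2. T m x) \<partial>lborel)"
          by (rule nn_integral_add) (use Tm in auto)
        also have "(\<integral>\<^sup>+x. (\<Sum>m=1..n div 2. T m x) \<partial>lborel) = (\<Sum>m=1..n div 2. (\<integral>\<^sup>+x. T m x \<partial>lborel))"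
          by (rule nn_integral_sum) (use Tm in auto)
        finally show ?thesis .
      qed
      also have "\<dots> \<le> ennreal (2^r * B * xi^n * bc) + (\<Sum>m=1..n div 2. ennreal (\<bar>dc m\<bar> * xi^(2*m) * Bm m))"
      proof (intro add_mono P1'[OF xi] sum_mono)
        fix m assume m: "m \<in> {1..n div 2}"
        have "(\<integral>\<^sup>+x. T m x \<partial>lborel) = ennreal (\<bar>dc m\<bar> * xi^(2*m)) * L1norm ((deriv ^^ (2*m)) f)"
          unfolding T_def L1norm_def by (rule nn_integral_cmult) (use Fm[OF m] in measurable)
        also have "\<dots> = ennreal (\<bar>dc m\<bar> * xi^(2*m) * Bm m)"
          unfolding LBm[OF m] by (rule ennreal_mult'[symmetric]) (use xi in simp)
        finally show "(\<integral>\<^sup>+x. T m x \<partial>lborel) \<le> ennreal (\<bar>dc m\<bar> * xi^(2*m) * Bm m)" by simp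
      qed
      also have "\<dots> = ennreal (h xi)"
      proof -
        have B0: "B \<ge> 0" unfolding B_def by (rule integral_nonneg_AE) auto
        have Bm0: "Bm m \<ge> 0" for m unfolding Bm_def by (rule integral_nonneg_AE) auto
        have bc0: "bc \<ge> 0"
        proof -
          have p1: "1 / (2 * real al) > 0" using al by simp
          have bek: "be > real (k) / (2 * real al)" if "k \<le> n + r + 1" for k
          proof -
            have "real k / (2 * real al) \<le> real (n + r + 1) / (2 * real al)"
              using that by (intro divide_right_mono) auto
            then show ?thesis using be by linarith
          qed
          have bek2: "(real n + real x) / (2 * real al) < be" if "x \<le> Suc r" for x
            using bek[of "n+x"] that by simp
          have "be - 1 / (2 * real al) > 0" using bek[of 1] by simp
          then show ?thesis unfolding bc_def bound_const_def using p1
            by (intro mult_nonneg_nonneg sum_nonneg divide_nonneg_nonneg) (auto intro!: less_imp_le[OF Gamma_real_pos] simp: bek2)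
        qed
        show ?thesis unfolding h_def using B0 Bm0 bc0 xi
          by (simp add: ennreal_plus[symmetric] sum_ennreal sum_nonneg del: ennreal_plus)
      qed
      finally show "L1norm (\<lambda>x. M_op r n al be xi f x - f x) \<le> ennreal (h xi)" .
    qed
  qed
  show ?thesis using P1 P2 P3 by (simp add: g_def)
qed

end
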